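(* Let $Z$ be the incidence matrix of the finite poset $\Phi_6((12)(3456))$ (with the pointwise order). Then $\phi_9\big((12)(345)(6789)\big)$ equals the sum of all entries of $Z^3$ (equivalently, the number of chains $a_1\le a_2\le a_3\le a_4$ in $\Phi_6((12)(3456))$), and its value is $22062570$.
   Context: $B=\{0,1\}$ with $0\le1$; $B^n$ is ordered componentwise; $D_n$ is the set of monotone functions $B^n\to B$, ordered pointwise. $S_n$ acts on $D_n$ by $(\pi f)(x_1,\dots,x_n)=f(x_{\pi(1)},\dots,x_{\pi(n)})$. For $\pi\in S_n$, $\Phi_n(\pi)=\{f\in D_n:\pi f=f\}$ and $\phi_n(\pi)=|\Phi_n(\pi)|$. Note $\phi_n(\pi)$ depends only on the cycle type of $\pi$. The incidence matrix of a finite poset $(X,\le)$ with elements $x_1,\dots,x_m$ is the $m\times m$ matrix $M$ with $M_{i,j}=1$ if $x_i\le x_j$ and $0$ otherwise. *)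

theory Defs
  imports "HOL-Combinatorics.Cycles"
begin

text \<open>Points of B^n: boolean vectors indexed by 1..n, represented as
  functions nat => bool that are False outside {1..n}.\<close>
definition cube :: "nat \<Rightarrow> (nat \<Rightarrow> bool) set" where
  "cube n = {x. \<forall>i. i \<notin> {1..n} \<longrightarrow> \<not> x i}"

definition D :: "nat \<Rightarrow> ((nat \<Rightarrow> bool) \<Rightarrow> bool) set" where
  "D n = {f. (\<forall>x\<in>cube n. \<forall>y\<in>cube n. x \<le> y \<longrightarrow> f x \<le> f y)
             \<and> (\<forall>x. x \<notin> cube n \<longrightarrow> f x = False)}"

definition act :: "(nat \<Rightarrow> nat) \<Rightarrow> ((nat \<Rightarrow> bool) \<Rightarrow> bool) \<Rightarrow> ((nat \<Rightarrow> bool) \<Rightarrow> bool)" where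
  "act \<pi> f = (\<lambda>x. f (x \<circ> \<pi>))"

definition Phi :: "nat \<Rightarrow> (nat \<Rightarrow> nat) \<Rightarrow> ((nat \<Rightarrow> bool) \<Rightarrow> bool) set" where
  "Phi n \<pi> = {f \<in> D n. act \<pi> f = f}"

definition phi :: "nat \<Rightarrow> (nat \<Rightarrow> nat) \<Rightarrow> nat" where
  "phi n \<pi> = card (Phi n \<pi>)"

definition incidence :: "'a::ord set \<Rightarrow> 'a \<Rightarrow> 'a \<Rightarrow> nat" where
  "incidence X a b = (if a \<le> b then 1 else 0)"

definition mmul :: "'a set \<Rightarrow> ('a \<Rightarrow> 'a \<Rightarrow> nat) \<Rightarrow> ('a \<Rightarrow> 'a \<Rightarrow> nat) \<Rightarrow> 'a \<Rightarrow> 'a \<Rightarrow> nat" where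
  "mmul X A B a c = (\<Sum>b\<in>X. A a b * B b c)"

fun mpow :: "'a set \<Rightarrow> ('a \<Rightarrow> 'a \<Rightarrow> nat) \<Rightarrow> nat \<Rightarrow> 'a \<Rightarrow> 'a \<Rightarrow> nat" where
  "mpow X A 0 = (\<lambda>a b. if a = b then 1 else 0)"
| "mpow X A (Suc k) = mmul X (mpow X A k) A"

definition entry_sum :: "'a set \<Rightarrow> ('a \<Rightarrow> 'a \<Rightarrow> nat) \<Rightarrow> nat" where
  "entry_sum X A = (\<Sum>a\<in>X. \<Sum>b\<in>X. A a b)"

end

theory Submission imports Defs begin

type_synonym bf = "(nat \<Rightarrow> bool) \<Rightarrow> bool"

definition s6 :: "nat \<Rightarrow> nat" where "s6 = cycle_of_list [1,2] \<circ> cycle_of_list [3,4,5,6]"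
definition p9 :: "nat \<Rightarrow> nat" where "p9 = cycle_of_list [1,2] \<circ> cycle_of_list [3,4,5] \<circ> cycle_of_list [6,7,8,9]"

lemma s6_eq: "s6 i = (if i = 1 then 2 else if i = 2 then 1 else if i = 3 then 4 else if i = 4 then 5
   else if i = 5 then 6 else if i = 6 then 3 else i)"
  by (simp add: s6_def transpose_def)

lemma p9_eq: "p9 i = (if i = 1 then 2 else if i = 2 then 1 else if i = 3 then 4 else if i = 4 then 5
   else if i = 5 then 3 else if i = 6 then 7 else if i = 7 then 8 else if i = 8 then 9 else if i = 9 then 6 else i)"
  by (simp add: p9_def transpose_def)

definition s9 :: "nat \<Rightarrow> nat" where "s9 i = (if i = 1 then 2 else if i = 2 then 1 else if i = 6 then 7 else if i = 7 then 8 else if i = 8 then 9 else if i = 9 then 6 else i)"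
definition t9 :: "nat \<Rightarrow> nat" where "t9 i = (if i = 3 then 4 else if i = 4 then 5 else if i = 5 then 3 else i)"

lemma le9_cases: "(i::nat) \<le> 9 \<Longrightarrow> i = 0 \<or> i = 1 \<or> i = 2 \<or> i = 3 \<or> i = 4 \<or> i = 5 \<or> i = 6 \<or> i = 7 \<or> i = 8 \<or> i = 9"
  by auto

lemma p9_pow4: "p9 ^^ 4 = t9"
proof
  fix i show "(p9 ^^ 4) i = t9 i"
  proof (cases "i \<le> 9")
    case True then show ?thesis
      by (rule le9_cases[elim_format]) (elim disjE; simp add: p9_eq t9_def numeral_eq_Suc)
  next
    case False
    have "(p9 ^^ n) i = i" for n using False by (induction n) (auto simp: p9_eq)
    then show ?thesis using False by (simp add: t9_def)
  qed
qed

lemma p9_pow9: "p9 ^^ 9 = s9"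
proof
  fix i show "(p9 ^^ 9) i = s9 i"
  proof (cases "i \<le> 9")
    case True then show ?thesis
      by (rule le9_cases[elim_format]) (elim disjE; simp add: p9_eq s9_def numeral_eq_Suc)
  next
    case False
    have "(p9 ^^ n) i = i" for n using False by (induction n) (auto simp: p9_eq)
    then show ?thesis using False by (simp add: s9_def)
  qed
qed

lemma act_inv_pow:
  assumes "act p9 f = f" shows "f (x \<circ> (p9 ^^ n)) = f x"
proof (induction n arbitrary: x)
  case 0 then show ?case by simp
next
  case (Suc n)
  have "f (x \<circ> (p9 ^^ Suc n)) = f ((x \<circ> p9 ^^ n) \<circ> p9)" unfolding funpow_Suc_right by (simp add: comp_assoc)
  also have "\<dots> = act p9 f (x \<circ> p9 ^^ n)" by (simp add: act_def)
  also have "\<dots> = f x" using assms Suc.IH by (simp add: comp_def)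
  finally show ?case .
qed

lemma inv_t9: "act p9 f = f \<Longrightarrow> f (x \<circ> t9) = f x"
  using act_inv_pow[of f x 4] by (simp add: p9_pow4)
lemma inv_s9: "act p9 f = f \<Longrightarrow> f (x \<circ> s9) = f x"
  using act_inv_pow[of f x 9] by (simp add: p9_pow9)

lemma cube_iff: "x \<in> cube n \<longleftrightarrow> (\<forall>i. x i \<longrightarrow> 1 \<le> i \<and> i \<le> n)"
  unfolding cube_def by auto

definition wt :: "(nat \<Rightarrow> bool) \<Rightarrow> nat" where
  "wt x = (if x 3 then 1 else 0) + (if x 4 then 1 else 0) + (if x 5 then 1 else 0)"
definition pr :: "(nat \<Rightarrow> bool) \<Rightarrow> (nat \<Rightarrow> bool)" where
  "pr x = (\<lambda>i. if i = 1 \<or> i = 2 then x i else if 3 \<le> i \<and> i \<le> 6 then x (i + 3) else False)"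
definition emb :: "nat \<Rightarrow> (nat \<Rightarrow> bool) \<Rightarrow> (nat \<Rightarrow> bool)" where
  "emb k z = (\<lambda>i. if i = 1 \<or> i = 2 then z i else if 6 \<le> i \<and> i \<le> 9 then z (i - 3)
      else if 3 \<le> i \<and> i \<le> 5 then i < 3 + k else False)"
definition sel :: "nat \<Rightarrow> bf \<times> bf \<times> bf \<times> bf \<Rightarrow> bf" where
  "sel k c = (case c of (a1,a2,a3,a4) \<Rightarrow> if k = 0 then a1 else if k = 1 then a2 else if k = 2 then a3 else a4)"
definition Fm :: "bf \<times> bf \<times> bf \<times> bf \<Rightarrow> bf" where
  "Fm c = (\<lambda>x. x \<in> cube 9 \<and> sel (wt x) c (pr x))"
definition chains :: "'a::ord set \<Rightarrow> ('a \<times> 'a \<times> 'a \<times> 'a) set" where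
  "chains X = {(a1, a2, a3, a4). a1 \<in> X \<and> a2 \<in> X \<and> a3 \<in> X \<and> a4 \<in> X
                                      \<and> a1 \<le> a2 \<and> a2 \<le> a3 \<and> a3 \<le> a4}"

definition P6 :: "bf set" where "P6 = Phi 6 s6"

lemma pr_cube: "pr x \<in> cube 6" by (auto simp: cube_iff pr_def)
lemma emb_cube: "emb k z \<in> cube 9" by (auto simp: cube_iff emb_def)
lemma wt_le: "wt x \<le> 3" by (simp add: wt_def)
lemma wt_emb: "k \<le> 3 \<Longrightarrow> wt (emb k z) = k" by (auto simp: wt_def emb_def)
lemma pr_emb: "z \<in> cube 6 \<Longrightarrow> pr (emb k z) = z"
  by (rule ext) (auto simp: pr_def emb_def cube_iff)
lemma pr_mono: "x \<le> y \<Longrightarrow> pr x \<le> pr y" by (auto simp: pr_def le_fun_def)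
lemma wt_mono: "x \<le> y \<Longrightarrow> wt x \<le> wt y" by (auto simp: wt_def le_fun_def)
lemma emb_mono: "z \<le> z' \<Longrightarrow> k \<le> k' \<Longrightarrow> emb k z \<le> emb k' z'" by (auto simp: emb_def le_fun_def)

lemma cube_perm:
  assumes "\<And>i. \<not> (1 \<le> i \<and> i \<le> n) \<Longrightarrow> p i = i"
  shows "x \<circ> p \<in> cube n \<longleftrightarrow> x \<in> cube n"
  using assms unfolding cube_def by auto
lemma cube9_p9: "x \<circ> p9 \<in> cube 9 \<longleftrightarrow> x \<in> cube 9"
  by (rule cube_perm) (auto simp: p9_eq)
lemma cube6_s6: "x \<circ> s6 \<in> cube 6 \<longleftrightarrow> x \<in> cube 6"
  by (rule cube_perm) (auto simp: s6_eq)
lemma wt_p9: "wt (x \<circ> p9) = wt x" by (simp add: wt_def p9_eq)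
lemma pr_p9: "pr (x \<circ> p9) = pr x \<circ> s6"
  by (rule ext) (auto simp: pr_def p9_eq s6_eq)
lemma emb_s6: "emb k (z \<circ> s6) = emb k z \<circ> s9"
proof
  fix i show "emb k (z \<circ> s6) i = (emb k z \<circ> s9) i"
  proof (cases "i \<le> 9")
    case True then show ?thesis
      by (rule le9_cases[elim_format]) (elim disjE; simp add: emb_def s6_eq s9_def)
  next
    case False then show ?thesis by (simp add: emb_def s9_def)
  qed
qed

lemma D_mono: "f \<in> D n \<Longrightarrow> x \<in> cube n \<Longrightarrow> y \<in> cube n \<Longrightarrow> x \<le> y \<Longrightarrow> f x \<Longrightarrow> f y"
  unfolding D_def by (auto simp: le_bool_def)
lemma D_out: "f \<in> D n \<Longrightarrow> x \<notin> cube n \<Longrightarrow> \<not> f x"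
  unfolding D_def by auto
lemma Phi_inv: "f \<in> Phi n p \<Longrightarrow> f (x \<circ> p) = f x"
  unfolding Phi_def act_def by (metis (mono_tags, lifting) mem_Collect_eq)

lemma sel_in: "c \<in> chains X \<Longrightarrow> sel k c \<in> X"
  by (auto simp: chains_def sel_def)
lemma sel_mono: assumes c: "c \<in> chains X" and kk: "k \<le> k'" shows "sel k c \<le> sel k' c"
proof -
  obtain a1 a2 a3 a4 where ce: "c = (a1,a2,a3,a4)" and le: "a1 \<le> a2" "a2 \<le> a3" "a3 \<le> a4"
    using c by (auto simp: chains_def)
  have "a1 \<le> a3" "a1 \<le> a4" "a2 \<le> a4" using le order_trans by blast+
  then show ?thesis using le kk ce by (auto simp: sel_def)
qed

lemma Fm_in: assumes c: "c \<in> chains P6" shows "Fm c \<in> Phi 9 p9"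
proof -
  have D: "Fm c \<in> D 9"
    unfolding D_def
  proof (intro CollectI conjI ballI impI allI)
    fix x y :: "nat \<Rightarrow> bool" assume x: "x \<in> cube 9" and y: "y \<in> cube 9" and xy: "x \<le> y"
    show "Fm c x \<le> Fm c y"
    proof (cases "sel (wt x) c (pr x)")
      case True
      have "sel (wt x) c \<in> D 6" using sel_in[OF c] by (simp add: P6_def Phi_def)
      then have "sel (wt x) c (pr y)" using D_mono[OF _ pr_cube pr_cube pr_mono[OF xy]] True by blast
      then have "sel (wt y) c (pr y)" using sel_mono[OF c wt_mono[OF xy]] by (auto simp: le_fun_def)
      then show ?thesis using y by (simp add: Fm_def)
    qed (simp add: Fm_def)
  next
    fix x :: "nat \<Rightarrow> bool" assume "x \<notin> cube 9" then show "Fm c x = False" by (simp add: Fm_def)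
  qed
  have "act p9 (Fm c) = Fm c"
  proof
    fix x
    have "sel (wt x) c \<in> Phi 6 s6" using sel_in[OF c] by (simp add: P6_def)
    then have "sel (wt x) c (pr x \<circ> s6) = sel (wt x) c (pr x)" by (rule Phi_inv)
    then show "act p9 (Fm c) x = Fm c x"
      by (simp add: act_def Fm_def cube9_p9 wt_p9 pr_p9)
  qed
  with D show ?thesis by (simp add: Phi_def)
qed

lemma sel_eq: assumes "\<And>k. k \<le> 3 \<Longrightarrow> sel k c = sel k d" shows "c = d"
proof -
  have "sel 0 c = sel 0 d" "sel 1 c = sel 1 d" "sel 2 c = sel 2 d" "sel 3 c = sel 3 d" using assms by auto
  then show ?thesis by (cases c; cases d) (simp add: sel_def)
qed

lemma Fm_inj: "inj_on Fm (chains P6)"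
proof
  fix c d assume c: "c \<in> chains P6" and d: "d \<in> chains P6" and eq: "Fm c = Fm d"
  have "sel k c = sel k d" if k: "k \<le> 3" for k
  proof
    fix z
    show "sel k c z = sel k d z"
    proof (cases "z \<in> cube 6")
      case True
      have "Fm c (emb k z) = Fm d (emb k z)" using eq by simp
      then show ?thesis using True k by (simp add: Fm_def emb_cube wt_emb pr_emb)
    next
      case False
      have "sel k c \<in> D 6" "sel k d \<in> D 6" using sel_in[OF c] sel_in[OF d] by (auto simp: P6_def Phi_def)
      then show ?thesis using False D_out by blast
    qed
  qed
  then show "c = d" by (rule sel_eq)
qed

lemma ext9:
  fixes f g :: "nat \<Rightarrow> 'a"
  assumes "\<And>i. i \<le> 9 \<Longrightarrow> i = 0 \<or> i = 1 \<or> i = 2 \<or> i = 3 \<or> i = 4 \<or> i = 5 \<or> i = 6 \<or> i = 7 \<or> i = 8 \<or> i = 9 \<Longrightarrow> f i = g i"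
    and "\<And>i. 9 < i \<Longrightarrow> f i = g i"
  shows "f = g"
proof
  fix i show "f i = g i"
    using assms le9_cases[of i] by (cases "i \<le> 9") auto
qed

lemma emb_pr_id:
  assumes x: "x \<in> cube 9" and c: "(x 3 \<longrightarrow> x 4 \<longrightarrow> \<not> x 5 \<longrightarrow> True) \<and> (x 4 \<longrightarrow> x 3) \<and> (x 5 \<longrightarrow> x 4)"
  shows "emb (wt x) (pr x) = x"
proof (rule ext9)
  fix i :: nat assume "i = 0 \<or> i = 1 \<or> i = 2 \<or> i = 3 \<or> i = 4 \<or> i = 5 \<or> i = 6 \<or> i = 7 \<or> i = 8 \<or> i = 9"
  then show "emb (wt x) (pr x) i = x i"
    using x c by (elim disjE) (auto simp: emb_def pr_def wt_def cube_iff)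
next
  fix i :: nat assume "9 < i" then show "emb (wt x) (pr x) i = x i" using x by (auto simp: emb_def cube_iff)
qed

lemma emb_pr_t1:
  assumes x: "x \<in> cube 9" and c: "\<not> x 3" "x 4"
  shows "emb (wt x) (pr x) = x \<circ> t9"
proof (rule ext9)
  fix i :: nat assume "i = 0 \<or> i = 1 \<or> i = 2 \<or> i = 3 \<or> i = 4 \<or> i = 5 \<or> i = 6 \<or> i = 7 \<or> i = 8 \<or> i = 9"
  then show "emb (wt x) (pr x) i = (x \<circ> t9) i"
    using x c by (elim disjE) (auto simp: emb_def pr_def wt_def cube_iff t9_def)
next
  fix i :: nat assume "9 < i" then show "emb (wt x) (pr x) i = (x \<circ> t9) i" using x by (auto simp: emb_def cube_iff t9_def)
qed

lemma emb_pr_t2: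
  assumes x: "x \<in> cube 9" and c: "\<not> x 4" "x 5"
  shows "emb (wt x) (pr x) = x \<circ> t9 \<circ> t9"
proof (rule ext9)
  fix i :: nat assume "i = 0 \<or> i = 1 \<or> i = 2 \<or> i = 3 \<or> i = 4 \<or> i = 5 \<or> i = 6 \<or> i = 7 \<or> i = 8 \<or> i = 9"
  then show "emb (wt x) (pr x) i = (x \<circ> t9 \<circ> t9) i"
    using x c by (elim disjE) (auto simp: emb_def pr_def wt_def cube_iff t9_def)
next
  fix i :: nat assume "9 < i" then show "emb (wt x) (pr x) i = (x \<circ> t9 \<circ> t9) i" using x by (auto simp: emb_def cube_iff t9_def)
qed

lemma emb_pr_f:
  assumes f: "act p9 f = f" and x: "x \<in> cube 9"
  shows "f (emb (wt x) (pr x)) = f x"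
proof -
  consider "\<not> x 3" "x 4" | "\<not> x 4" "x 5" | "(x 4 \<longrightarrow> x 3) \<and> (x 5 \<longrightarrow> x 4)" by blast
  then show ?thesis
  proof cases
    case 1 then show ?thesis using emb_pr_t1[OF x] inv_t9[OF f] by simp
  next
    case 2 then show ?thesis using emb_pr_t2[OF x] inv_t9[OF f] by (metis comp_assoc)
  next
    case 3 then show ?thesis using emb_pr_id[OF x] by simp
  qed
qed

definition Gm :: "bf \<Rightarrow> bf \<times> bf \<times> bf \<times> bf" where
  "Gm f = ((\<lambda>z. z \<in> cube 6 \<and> f (emb 0 z)), (\<lambda>z. z \<in> cube 6 \<and> f (emb 1 z)),
           (\<lambda>z. z \<in> cube 6 \<and> f (emb 2 z)), (\<lambda>z. z \<in> cube 6 \<and> f (emb 3 z)))"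

lemma sel_Gm: assumes "k \<le> 3" shows "sel k (Gm f) = (\<lambda>z. z \<in> cube 6 \<and> f (emb k z))"
proof -
  have "k = 0 \<or> k = 1 \<or> k = 2 \<or> k = 3" using assms by auto
  then show ?thesis by (elim disjE) (simp_all add: sel_def Gm_def)
qed

lemma g_in_P6: assumes f: "f \<in> Phi 9 p9" shows "(\<lambda>z. z \<in> cube 6 \<and> f (emb k z)) \<in> P6"
proof -
  have fD: "f \<in> D 9" and fa: "act p9 f = f" using f by (auto simp: Phi_def)
  have "(\<lambda>z. z \<in> cube 6 \<and> f (emb k z)) \<in> D 6"
    unfolding D_def
  proof (intro CollectI conjI ballI impI allI)
    fix x y :: "nat \<Rightarrow> bool" assume "x \<in> cube 6" "y \<in> cube 6" "x \<le> y"
    then show "(x \<in> cube 6 \<and> f (emb k x)) \<le> (y \<in> cube 6 \<and> f (emb k y))"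
      using D_mono[OF fD emb_cube emb_cube emb_mono[of x y k k]] by auto
  qed simp
  moreover have "act s6 (\<lambda>z. z \<in> cube 6 \<and> f (emb k z)) = (\<lambda>z. z \<in> cube 6 \<and> f (emb k z))"
    by (rule ext) (simp add: act_def cube6_s6 emb_s6 inv_s9[OF fa])
  ultimately show ?thesis by (simp add: P6_def Phi_def)
qed

lemma Gm_chain: assumes f: "f \<in> Phi 9 p9" shows "Gm f \<in> chains P6"
proof -
  have fD: "f \<in> D 9" using f by (auto simp: Phi_def)
  have le: "(\<lambda>z. z \<in> cube 6 \<and> f (emb k z)) \<le> (\<lambda>z. z \<in> cube 6 \<and> f (emb k' z))" if "k \<le> k'" for k k'
    using D_mono[OF fD emb_cube emb_cube emb_mono[of _ _ k k']] that by (auto simp: le_fun_def)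
  show ?thesis using g_in_P6[OF f] le unfolding chains_def Gm_def by auto
qed

lemma Fm_Gm: assumes f: "f \<in> Phi 9 p9" shows "Fm (Gm f) = f"
proof
  fix x
  have fD: "f \<in> D 9" and fa: "act p9 f = f" using f by (auto simp: Phi_def)
  show "Fm (Gm f) x = f x"
  proof (cases "x \<in> cube 9")
    case True
    then show ?thesis using emb_pr_f[OF fa True] by (simp add: Fm_def sel_Gm wt_le pr_cube)
  next
    case False then show ?thesis using D_out[OF fD] by (simp add: Fm_def)
  qed
qed

lemma partB: "bij_betw Fm (chains P6) (Phi 9 p9)"
  unfolding bij_betw_def
proof
  show "inj_on Fm (chains P6)" by (rule Fm_inj)
  show "Fm ` chains P6 = Phi 9 p9"
    using Fm_in Fm_Gm Gm_chain by (metis image_eqI subsetI subset_antisym image_subsetI)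
qed


lemma chains_Sigma: "chains X = Sigma X (\<lambda>a. Sigma X (\<lambda>b. Sigma X (\<lambda>c. {d \<in> X. a \<le> b \<and> b \<le> c \<and> c \<le> d})))"
  by (auto simp: chains_def)

lemma card_filter_sum: "finite X \<Longrightarrow> card {d \<in> X. Q d} = (\<Sum>d\<in>X. if Q d then 1 else 0)"
  by (simp add: sum.If_cases Int_def)

lemma partA:
  fixes X :: "'a::ord set"
  assumes fin: "finite X"
  shows "entry_sum X (mpow X (incidence X) 3) = card (chains X)"
proof -
  let ?I = "incidence X"
  have m1: "mpow X ?I 1 a b = ?I a b" if "a \<in> X" for a b
    using fin that by (simp add: mmul_def if_distrib[of "\<lambda>u. u * _"] sum.delta cong: if_cong)
  have e2: "mpow X ?I 2 = mmul X (mpow X ?I 1) ?I" by (metis mpow.simps(2) Suc_1)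
  have e3: "mpow X ?I 3 = mmul X (mpow X ?I 2) ?I" using mpow.simps(2)[of X ?I 2] by (simp add: numeral_3_eq_3 del: mpow.simps)
  have m2: "mpow X ?I 2 a c = (\<Sum>b\<in>X. ?I a b * ?I b c)" if "a \<in> X" for a c
    unfolding e2 mmul_def using m1[OF that] by simp
  have m3: "mpow X ?I 3 a d = (\<Sum>c\<in>X. \<Sum>b\<in>X. ?I a b * ?I b c * ?I c d)" if "a \<in> X" for a d
    unfolding e3 mmul_def using m2[OF that] by (simp add: sum_distrib_right)
  have "entry_sum X (mpow X ?I 3) = (\<Sum>a\<in>X. \<Sum>d\<in>X. \<Sum>c\<in>X. \<Sum>b\<in>X. ?I a b * ?I b c * ?I c d)"
    unfolding entry_sum_def by (intro sum.cong refl) (simp add: m3)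
  also have "\<dots> = (\<Sum>a\<in>X. \<Sum>b\<in>X. \<Sum>c\<in>X. \<Sum>d\<in>X. ?I a b * ?I b c * ?I c d)"
  proof (rule sum.cong[OF refl])
    fix a
    have "(\<Sum>d\<in>X. \<Sum>c\<in>X. \<Sum>b\<in>X. ?I a b * ?I b c * ?I c d) = (\<Sum>c\<in>X. \<Sum>d\<in>X. \<Sum>b\<in>X. ?I a b * ?I b c * ?I c d)"
      by (rule sum.swap)
    also have "\<dots> = (\<Sum>c\<in>X. \<Sum>b\<in>X. \<Sum>d\<in>X. ?I a b * ?I b c * ?I c d)"
      by (rule sum.cong[OF refl], rule sum.swap)
    also have "\<dots> = (\<Sum>b\<in>X. \<Sum>c\<in>X. \<Sum>d\<in>X. ?I a b * ?I b c * ?I c d)"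
      by (rule sum.swap)
    finally show "(\<Sum>d\<in>X. \<Sum>c\<in>X. \<Sum>b\<in>X. ?I a b * ?I b c * ?I c d) = (\<Sum>b\<in>X. \<Sum>c\<in>X. \<Sum>d\<in>X. ?I a b * ?I b c * ?I c d)" .
  qed
  also have "\<dots> = (\<Sum>a\<in>X. \<Sum>b\<in>X. \<Sum>c\<in>X. card {d \<in> X. a \<le> b \<and> b \<le> c \<and> c \<le> d})"
    by (intro sum.cong refl) (simp add: card_filter_sum[OF fin] incidence_def)
  also have "\<dots> = card (chains X)"
    unfolding chains_Sigma using fin by (simp add: card_SigmaI)
  finally show ?thesis .
qed


type_synonym dm = "nat \<times> nat \<times> nat \<times> nat"
type_synonym tu = "dm \<times> dm \<times> dm \<times> dm \<times> dm \<times> dm"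

fun zi :: "bool \<Rightarrow> bool \<Rightarrow> bool \<Rightarrow> bool \<Rightarrow> nat \<times> bool" where
  "zi False False False False = (0, False)"
| "zi False False False True = (1, True)"
| "zi False False True False = (1, False)"
| "zi False False True True = (2, False)"
| "zi False True False False = (1, True)"
| "zi False True False True = (3, True)"
| "zi False True True False = (2, True)"
| "zi False True True True = (4, True)"
| "zi True False False False = (1, False)"
| "zi True False False True = (2, True)"
| "zi True False True False = (3, False)"
| "zi True False True True = (4, False)"
| "zi True True False False = (2, False)"
| "zi True True False True = (4, True)"
| "zi True True True False = (4, False)"
| "zi True True True True = (5, False)"

definition rep :: "nat \<Rightarrow> bool list" where
  "rep k = [[False,False,False,False],[True,False,False,False],[True,True,False,False],
            [True,False,True,False],[True,True,True,False],[True,True,True,True]] ! k"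

definition sig :: "bool list \<Rightarrow> bool list" where
  "sig bs = [bs!1, bs!0, bs!3, bs!4, bs!5, bs!2]"

definition canon :: "bool list \<Rightarrow> bool list" where
  "canon bs = (case zi (bs!2) (bs!3) (bs!4) (bs!5) of (k, p) \<Rightarrow>
      (if p then [bs!1, bs!0] else [bs!0, bs!1]) @ rep k)"

fun dget :: "dm \<Rightarrow> bool \<Rightarrow> bool \<Rightarrow> nat" where
  "dget (a,b,c,d) y1 y2 = (if y1 then (if y2 then d else b) else (if y2 then c else a))"

fun blkget :: "tu \<Rightarrow> nat \<Rightarrow> dm" where
  "blkget (s0,g1,g2,g3,g4,s5) k = (if k = 0 then s0 else if k = 1 then g1 else if k = 2 then g2
      else if k = 3 then g3 else if k = 4 then g4 else s5)"

definition val :: "tu \<Rightarrow> bool list \<Rightarrow> nat" where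
  "val v bs = (case zi (bs!2) (bs!3) (bs!4) (bs!5) of (k, p) \<Rightarrow>
      (if p then dget (blkget v k) (bs!1) (bs!0) else dget (blkget v k) (bs!0) (bs!1)))"

fun dle :: "dm \<Rightarrow> dm \<Rightarrow> bool" where
  "dle (a,b,c,d) (a',b',c',d') = (a \<le> a' \<and> b \<le> b' \<and> c \<le> c' \<and> d \<le> d')"
fun sw :: "dm \<Rightarrow> dm" where "sw (a,b,c,d) = (a,c,b,d)"

definition Dd :: "dm set" where "Dd = {(a,b,c,d). a \<le> b \<and> a \<le> c \<and> b \<le> d \<and> c \<le> d \<and> d \<le> 4}"
definition Sy :: "dm set" where "Sy = {(a,b,c,d). a \<le> b \<and> b \<le> d \<and> d \<le> 4 \<and> c = b}"

definition T :: "tu set" where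
  "T = {(s0,g1,g2,g3,g4,s5). s0 \<in> Sy \<and> g1 \<in> Dd \<and> g2 \<in> Dd \<and> g3 \<in> Dd \<and> g4 \<in> Dd \<and> s5 \<in> Sy
     \<and> dle s0 g1 \<and> dle g1 g2 \<and> dle g1 (sw g2) \<and> dle g1 g3 \<and> dle g2 g4 \<and> dle (sw g2) g4
     \<and> dle g3 g4 \<and> dle g4 s5}"

definition covok :: "tu \<Rightarrow> bool" where
  "covok v = (\<forall>bs\<in>set (List.n_lists 6 [True, False]). \<forall>i\<in>set [0,1,2,3,4,5].
       \<not> bs ! i \<longrightarrow> val v bs \<le> val v (bs[i := True]))"

fun symb :: "tu \<Rightarrow> bool" where
  "symb ((a0,b0,c0,d0),g1,g2,g3,g4,(a5,b5,c5,d5)) = (b0 = c0 \<and> b5 = c5)"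
fun bnd :: "tu \<Rightarrow> bool" where
  "bnd ((a0,b0,c0,d0),g1,g2,g3,g4,(a5,b5,c5,d5)) = (d5 \<le> 4)"

lemma K1: "\<forall>bs\<in>set (List.n_lists 6 [True, False]). canon bs \<in> {bs, sig bs, sig (sig bs), sig (sig (sig bs))}"
  by (simp add: canon_def sig_def rep_def numeral_eq_Suc)


lemma K2: "symb ((a0,b0,c0,d0),g1,g2,g3,g4,(a5,b5,c5,d5)) \<Longrightarrow> \<forall>bs\<in>set (List.n_lists 6 [True, False]). val ((a0,b0,c0,d0),g1,g2,g3,g4,(a5,b5,c5,d5)) (sig bs) = val ((a0,b0,c0,d0),g1,g2,g3,g4,(a5,b5,c5,d5)) bs"
  by (simp add: val_def sig_def numeral_eq_Suc)

lemma covok_alt: "covok v \<longleftrightarrow> (\<forall>bs. length bs = 6 \<longrightarrow> (\<forall>i<6. \<not> bs ! i \<longrightarrow> val v bs \<le> val v (bs[i := True])))"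
proof -
  have a: "set (List.n_lists 6 [True, False]) = {bs. length bs = 6}" by (auto simp: set_n_lists)
  have b: "set [0::nat,1,2,3,4,5] = {..<6}" by auto
  show ?thesis unfolding covok_def a b by auto
qed

lemma covok_of_atoms:
  assumes "c0 = b0" "c5 = b5" and "a0 \<le> b0" "a0 \<le> a1" "b0 \<le> d0" "b0 \<le> b1" "b0 \<le> c1" "d0 \<le> d1" "a1 \<le> b1" "a1 \<le> c1" "a1 \<le> a2" "a1 \<le> a3" "b1 \<le> d1" "b1 \<le> b2" "b1 \<le> c2" "b1 \<le> b3" "c1 \<le> d1" "c1 \<le> b2" "c1 \<le> c2" "c1 \<le> c3" "d1 \<le> d2" "d1 \<le> d3" "a2 \<le> b2" "a2 \<le> c2" "a2 \<le> a4" "b2 \<le> d2" "b2 \<le> b4" "b2 \<le> c4" "c2 \<le> d2" "c2 \<le> b4" "c2 \<le> c4" "d2 \<le> d4" "a3 \<le> b3" "a3 \<le> c3" "a3 \<le> a4" "b3 \<le> d3" "b3 \<le> b4" "c3 \<le> d3" "c3 \<le> c4" "d3 \<le> d4" "a4 \<le> b4" "a4 \<le> c4" "a4 \<le> a5" "b4 \<le> d4" "b4 \<le> b5" "c4 \<le> d4" "c4 \<le> b5" "d4 \<le> d5" "a5 \<le> b5" "b5 \<le> d5"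
  shows "covok ((a0,b0,c0,d0),(a1,b1,c1,d1),(a2,b2,c2,d2),(a3,b3,c3,d3),(a4,b4,c4,d4),(a5,b5,c5,d5))"
  unfolding covok_def using assms by (simp add: val_def numeral_eq_Suc)

lemma T_covok: assumes "((a0,b0,c0,d0),(a1,b1,c1,d1),(a2,b2,c2,d2),(a3,b3,c3,d3),(a4,b4,c4,d4),(a5,b5,c5,d5)) \<in> T" shows "covok ((a0,b0,c0,d0),(a1,b1,c1,d1),(a2,b2,c2,d2),(a3,b3,c3,d3),(a4,b4,c4,d4),(a5,b5,c5,d5))"
proof -
  have hS0: "(a0,b0,c0,d0) \<in> Sy" and hG1: "(a1,b1,c1,d1) \<in> Dd" and hG2: "(a2,b2,c2,d2) \<in> Dd" and hG3: "(a3,b3,c3,d3) \<in> Dd" and hG4: "(a4,b4,c4,d4) \<in> Dd" and hS5: "(a5,b5,c5,d5) \<in> Sy"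
    and hL1: "dle (a0,b0,c0,d0) (a1,b1,c1,d1)"
    and hL2: "dle (a1,b1,c1,d1) (a2,b2,c2,d2)"
    and hL3: "dle (a1,b1,c1,d1) (a2,c2,b2,d2)"
    and hL4: "dle (a1,b1,c1,d1) (a3,b3,c3,d3)"
    and hL5: "dle (a2,b2,c2,d2) (a4,b4,c4,d4)"
    and hL6: "dle (a2,c2,b2,d2) (a4,b4,c4,d4)"
    and hL7: "dle (a3,b3,c3,d3) (a4,b4,c4,d4)"
    and hL8: "dle (a4,b4,c4,d4) (a5,b5,c5,d5)"
    using assms by (simp_all add: T_def)
  have B0: "a0 \<le> b0" "a0 \<le> c0" "b0 \<le> d0" "c0 \<le> d0" "d0 \<le> 4" "c0 = b0" using hS0 by (simp_all add: Sy_def)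
  have B1: "a1 \<le> b1" "a1 \<le> c1" "b1 \<le> d1" "c1 \<le> d1" "d1 \<le> 4" using hG1 by (auto simp: Sy_def Dd_def)
  have B2: "a2 \<le> b2" "a2 \<le> c2" "b2 \<le> d2" "c2 \<le> d2" "d2 \<le> 4" using hG2 by (auto simp: Sy_def Dd_def)
  have B3: "a3 \<le> b3" "a3 \<le> c3" "b3 \<le> d3" "c3 \<le> d3" "d3 \<le> 4" using hG3 by (auto simp: Sy_def Dd_def)
  have B4: "a4 \<le> b4" "a4 \<le> c4" "b4 \<le> d4" "c4 \<le> d4" "d4 \<le> 4" using hG4 by (auto simp: Sy_def Dd_def)
  have B5: "a5 \<le> b5" "a5 \<le> c5" "b5 \<le> d5" "c5 \<le> d5" "d5 \<le> 4" "c5 = b5" using hS5 by (simp_all add: Sy_def)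
  have CL1: "a0 \<le> a1" "b0 \<le> b1" "c0 \<le> c1" "d0 \<le> d1" using hL1 by simp_all
  have CL2: "a1 \<le> a2" "b1 \<le> b2" "c1 \<le> c2" "d1 \<le> d2" using hL2 by simp_all
  have CL3: "a1 \<le> a2" "b1 \<le> c2" "c1 \<le> b2" "d1 \<le> d2" using hL3 by simp_all
  have CL4: "a1 \<le> a3" "b1 \<le> b3" "c1 \<le> c3" "d1 \<le> d3" using hL4 by simp_all
  have CL5: "a2 \<le> a4" "b2 \<le> b4" "c2 \<le> c4" "d2 \<le> d4" using hL5 by simp_all
  have CL6: "a2 \<le> a4" "c2 \<le> b4" "b2 \<le> c4" "d2 \<le> d4" using hL6 by simp_all
  have CL7: "a3 \<le> a4" "b3 \<le> b4" "c3 \<le> c4" "d3 \<le> d4" using hL7 by simp_all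
  have CL8: "a4 \<le> a5" "b4 \<le> b5" "c4 \<le> c5" "d4 \<le> d5" using hL8 by simp_all
  show ?thesis
  proof (rule covok_of_atoms)
    show "c0 = b0" by (rule B0(6))
    show "c5 = b5" by (rule B5(6))
    show "a0 \<le> b0" using B0(1) B0(6) B5(6) by simp
    show "a0 \<le> a1" using CL1(1) B0(6) B5(6) by simp
    show "b0 \<le> d0" using B0(3) B0(6) B5(6) by simp
    show "b0 \<le> b1" using CL1(2) B0(6) B5(6) by simp
    show "b0 \<le> c1" using CL1(3) B0(6) B5(6) by simp
    show "d0 \<le> d1" using CL1(4) B0(6) B5(6) by simp
    show "a1 \<le> b1" using B1(1) B0(6) B5(6) by simp
    show "a1 \<le> c1" using B1(2) B0(6) B5(6) by simp
    show "a1 \<le> a2" using CL2(1) B0(6) B5(6) by simp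
    show "a1 \<le> a3" using CL4(1) B0(6) B5(6) by simp
    show "b1 \<le> d1" using B1(3) B0(6) B5(6) by simp
    show "b1 \<le> b2" using CL2(2) B0(6) B5(6) by simp
    show "b1 \<le> c2" using CL3(2) B0(6) B5(6) by simp
    show "b1 \<le> b3" using CL4(2) B0(6) B5(6) by simp
    show "c1 \<le> d1" using B1(4) B0(6) B5(6) by simp
    show "c1 \<le> b2" using CL3(3) B0(6) B5(6) by simp
    show "c1 \<le> c2" using CL2(3) B0(6) B5(6) by simp
    show "c1 \<le> c3" using CL4(3) B0(6) B5(6) by simp
    show "d1 \<le> d2" using CL2(4) B0(6) B5(6) by simp
    show "d1 \<le> d3" using CL4(4) B0(6) B5(6) by simp
    show "a2 \<le> b2" using B2(1) B0(6) B5(6) by simp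
    show "a2 \<le> c2" using B2(2) B0(6) B5(6) by simp
    show "a2 \<le> a4" using CL5(1) B0(6) B5(6) by simp
    show "b2 \<le> d2" using B2(3) B0(6) B5(6) by simp
    show "b2 \<le> b4" using CL5(2) B0(6) B5(6) by simp
    show "b2 \<le> c4" using CL6(3) B0(6) B5(6) by simp
    show "c2 \<le> d2" using B2(4) B0(6) B5(6) by simp
    show "c2 \<le> b4" using CL6(2) B0(6) B5(6) by simp
    show "c2 \<le> c4" using CL5(3) B0(6) B5(6) by simp
    show "d2 \<le> d4" using CL5(4) B0(6) B5(6) by simp
    show "a3 \<le> b3" using B3(1) B0(6) B5(6) by simp
    show "a3 \<le> c3" using B3(2) B0(6) B5(6) by simp
    show "a3 \<le> a4" using CL7(1) B0(6) B5(6) by simp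
    show "b3 \<le> d3" using B3(3) B0(6) B5(6) by simp
    show "b3 \<le> b4" using CL7(2) B0(6) B5(6) by simp
    show "c3 \<le> d3" using B3(4) B0(6) B5(6) by simp
    show "c3 \<le> c4" using CL7(3) B0(6) B5(6) by simp
    show "d3 \<le> d4" using CL7(4) B0(6) B5(6) by simp
    show "a4 \<le> b4" using B4(1) B0(6) B5(6) by simp
    show "a4 \<le> c4" using B4(2) B0(6) B5(6) by simp
    show "a4 \<le> a5" using CL8(1) B0(6) B5(6) by simp
    show "b4 \<le> d4" using B4(3) B0(6) B5(6) by simp
    show "b4 \<le> b5" using CL8(2) B0(6) B5(6) by simp
    show "c4 \<le> d4" using B4(4) B0(6) B5(6) by simp
    show "c4 \<le> b5" using CL8(3) B0(6) B5(6) by simp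
    show "d4 \<le> d5" using CL8(4) B0(6) B5(6) by simp
    show "a5 \<le> b5" using B5(1) B0(6) B5(6) by simp
    show "b5 \<le> d5" using B5(3) B0(6) B5(6) by simp
  qed
qed

lemma covok_T: assumes s0: "c0 = b0" and s5: "c5 = b5" and d5: "d5 \<le> 4" and cv: "covok ((a0,b0,c0,d0),(a1,b1,c1,d1),(a2,b2,c2,d2),(a3,b3,c3,d3),(a4,b4,c4,d4),(a5,b5,c5,d5))" shows "((a0,b0,c0,d0),(a1,b1,c1,d1),(a2,b2,c2,d2),(a3,b3,c3,d3),(a4,b4,c4,d4),(a5,b5,c5,d5)) \<in> T"
proof -
  note H = cv[unfolded covok_alt, rule_format]
  have A0: "a0 \<le> b0" using H[of "[False,False,False,False,False,False]" 0] s0 s5 by (simp add: val_def)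
  have A1: "a0 \<le> a1" using H[of "[False,False,False,False,False,False]" 2] s0 s5 by (simp add: val_def)
  have A2: "b0 \<le> d0" using H[of "[False,True,False,False,False,False]" 0] s0 s5 by (simp add: val_def)
  have A3: "b0 \<le> b1" using H[of "[False,True,False,False,False,False]" 3] s0 s5 by (simp add: val_def)
  have A4: "b0 \<le> c1" using H[of "[False,True,False,False,False,False]" 2] s0 s5 by (simp add: val_def)
  have A5: "d0 \<le> d1" using H[of "[True,True,False,False,False,False]" 2] s0 s5 by (simp add: val_def)
  have A6: "a1 \<le> b1" using H[of "[False,False,False,False,False,True]" 1] s0 s5 by (simp add: val_def)
  have A7: "a1 \<le> c1" using H[of "[False,False,False,False,False,True]" 0] s0 s5 by (simp add: val_def)
  have A8: "a1 \<le> a2" using H[of "[False,False,False,False,False,True]" 2] s0 s5 by (simp add: val_def)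
  have A9: "a1 \<le> a3" using H[of "[False,False,False,False,False,True]" 3] s0 s5 by (simp add: val_def)
  have A10: "b1 \<le> d1" using H[of "[False,True,False,False,False,True]" 0] s0 s5 by (simp add: val_def)
  have A11: "b1 \<le> b2" using H[of "[False,True,False,False,False,True]" 2] s0 s5 by (simp add: val_def)
  have A12: "b1 \<le> c2" using H[of "[False,True,False,False,False,True]" 4] s0 s5 by (simp add: val_def)
  have A13: "b1 \<le> b3" using H[of "[False,True,False,False,False,True]" 3] s0 s5 by (simp add: val_def)
  have A14: "c1 \<le> d1" using H[of "[False,True,False,False,True,False]" 0] s0 s5 by (simp add: val_def)
  have A15: "c1 \<le> b2" using H[of "[False,True,False,False,True,False]" 3] s0 s5 by (simp add: val_def)
  have A16: "c1 \<le> c2" using H[of "[False,True,False,False,True,False]" 5] s0 s5 by (simp add: val_def)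
  have A17: "c1 \<le> c3" using H[of "[False,True,False,False,True,False]" 2] s0 s5 by (simp add: val_def)
  have A18: "d1 \<le> d2" using H[of "[True,True,False,False,False,True]" 2] s0 s5 by (simp add: val_def)
  have A19: "d1 \<le> d3" using H[of "[True,True,False,False,False,True]" 3] s0 s5 by (simp add: val_def)
  have A20: "a2 \<le> b2" using H[of "[False,False,False,False,True,True]" 0] s0 s5 by (simp add: val_def)
  have A21: "a2 \<le> c2" using H[of "[False,False,False,False,True,True]" 1] s0 s5 by (simp add: val_def)
  have A22: "a2 \<le> a4" using H[of "[False,False,False,False,True,True]" 2] s0 s5 by (simp add: val_def)
  have A23: "b2 \<le> d2" using H[of "[False,True,False,True,True,False]" 0] s0 s5 by (simp add: val_def)
  have A24: "b2 \<le> b4" using H[of "[False,True,False,True,True,False]" 5] s0 s5 by (simp add: val_def)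
  have A25: "b2 \<le> c4" using H[of "[False,True,False,True,True,False]" 2] s0 s5 by (simp add: val_def)
  have A26: "c2 \<le> d2" using H[of "[False,True,False,False,True,True]" 0] s0 s5 by (simp add: val_def)
  have A27: "c2 \<le> b4" using H[of "[False,True,False,False,True,True]" 3] s0 s5 by (simp add: val_def)
  have A28: "c2 \<le> c4" using H[of "[False,True,False,False,True,True]" 2] s0 s5 by (simp add: val_def)
  have A29: "d2 \<le> d4" using H[of "[True,True,False,False,True,True]" 2] s0 s5 by (simp add: val_def)
  have A30: "a3 \<le> b3" using H[of "[False,False,False,True,False,True]" 1] s0 s5 by (simp add: val_def)
  have A31: "a3 \<le> c3" using H[of "[False,False,False,True,False,True]" 0] s0 s5 by (simp add: val_def)
  have A32: "a3 \<le> a4" using H[of "[False,False,False,True,False,True]" 2] s0 s5 by (simp add: val_def)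
  have A33: "b3 \<le> d3" using H[of "[False,True,False,True,False,True]" 0] s0 s5 by (simp add: val_def)
  have A34: "b3 \<le> b4" using H[of "[False,True,False,True,False,True]" 2] s0 s5 by (simp add: val_def)
  have A35: "c3 \<le> d3" using H[of "[False,True,True,False,True,False]" 0] s0 s5 by (simp add: val_def)
  have A36: "c3 \<le> c4" using H[of "[False,True,True,False,True,False]" 3] s0 s5 by (simp add: val_def)
  have A37: "d3 \<le> d4" using H[of "[True,True,False,True,False,True]" 2] s0 s5 by (simp add: val_def)
  have A38: "a4 \<le> b4" using H[of "[False,False,False,True,True,True]" 1] s0 s5 by (simp add: val_def)
  have A39: "a4 \<le> c4" using H[of "[False,False,False,True,True,True]" 0] s0 s5 by (simp add: val_def)
  have A40: "a4 \<le> a5" using H[of "[False,False,False,True,True,True]" 2] s0 s5 by (simp add: val_def)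
  have A41: "b4 \<le> d4" using H[of "[False,True,False,True,True,True]" 0] s0 s5 by (simp add: val_def)
  have A42: "b4 \<le> b5" using H[of "[False,True,False,True,True,True]" 2] s0 s5 by (simp add: val_def)
  have A43: "c4 \<le> d4" using H[of "[False,True,True,False,True,True]" 0] s0 s5 by (simp add: val_def)
  have A44: "c4 \<le> b5" using H[of "[False,True,True,False,True,True]" 3] s0 s5 by (simp add: val_def)
  have A45: "d4 \<le> d5" using H[of "[True,True,False,True,True,True]" 2] s0 s5 by (simp add: val_def)
  have A46: "a5 \<le> b5" using H[of "[False,False,True,True,True,True]" 0] s0 s5 by (simp add: val_def)
  have A47: "b5 \<le> d5" using H[of "[False,True,True,True,True,True]" 0] s0 s5 by (simp add: val_def)
  have e4: "d4 \<le> 4" using A45 d5 by linarith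
  have e3: "d3 \<le> 4" using A37 e4 by linarith
  have e2: "d2 \<le> 4" using A29 e4 by linarith
  have e1: "d1 \<le> 4" using A18 e2 by linarith
  have e0: "d0 \<le> 4" using A5 e1 by linarith
  have F0: "(a0,b0,c0,d0) \<in> Sy" using A0 A0 A2 A2 e0 s0 s5 by (simp add: Sy_def Dd_def)
  have F1: "(a1,b1,c1,d1) \<in> Dd" using A6 A7 A10 A14 e1 s0 s5 by (simp add: Sy_def Dd_def)
  have F2: "(a2,b2,c2,d2) \<in> Dd" using A20 A21 A23 A26 e2 s0 s5 by (simp add: Sy_def Dd_def)
  have F3: "(a3,b3,c3,d3) \<in> Dd" using A30 A31 A33 A35 e3 s0 s5 by (simp add: Sy_def Dd_def)
  have F4: "(a4,b4,c4,d4) \<in> Dd" using A38 A39 A41 A43 e4 s0 s5 by (simp add: Sy_def Dd_def)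
  have F5: "(a5,b5,c5,d5) \<in> Sy" using A46 A46 A47 A47 d5 s0 s5 by (simp add: Sy_def Dd_def)
  have GL1: "dle (a0,b0,c0,d0) (a1,b1,c1,d1)" using A1 A3 A4 A5 s0 s5 by simp
  have GL2: "dle (a1,b1,c1,d1) (a2,b2,c2,d2)" using A8 A11 A16 A18 s0 s5 by simp
  have GL3: "dle (a1,b1,c1,d1) (a2,c2,b2,d2)" using A8 A12 A15 A18 s0 s5 by simp
  have GL4: "dle (a1,b1,c1,d1) (a3,b3,c3,d3)" using A9 A13 A17 A19 s0 s5 by simp
  have GL5: "dle (a2,b2,c2,d2) (a4,b4,c4,d4)" using A22 A24 A28 A29 s0 s5 by simp
  have GL6: "dle (a2,c2,b2,d2) (a4,b4,c4,d4)" using A22 A27 A25 A29 s0 s5 by simp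
  have GL7: "dle (a3,b3,c3,d3) (a4,b4,c4,d4)" using A32 A34 A36 A37 s0 s5 by simp
  have GL8: "dle (a4,b4,c4,d4) (a5,b5,c5,d5)" using A40 A42 A44 A45 s0 s5 by simp
  show ?thesis unfolding T_def using F0 F1 F2 F3 F4 F5 GL1 GL2 GL3 GL4 GL5 GL6 GL7 GL8 by simp
qed



definition mk6 :: "bool list \<Rightarrow> (nat \<Rightarrow> bool)" where
  "mk6 bs = (\<lambda>i. 1 \<le> i \<and> i \<le> 6 \<and> bs ! (i - 1))"
definition L6 :: "(nat \<Rightarrow> bool) \<Rightarrow> bool list" where
  "L6 x = map x [1..<7]"

lemma mk6_cube: "mk6 bs \<in> cube 6" by (simp add: cube_iff mk6_def)
lemma L6_len[simp]: "length (L6 x) = 6" by (simp add: L6_def)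
lemma L6_nth: "i < 6 \<Longrightarrow> L6 x ! i = x (Suc i)" by (simp add: L6_def)
lemma mk6_L6: "x \<in> cube 6 \<Longrightarrow> mk6 (L6 x) = x"
proof
  fix i assume x: "x \<in> cube 6"
  show "mk6 (L6 x) i = x i"
  proof (cases "1 \<le> i \<and> i \<le> 6")
    case True
    have "L6 x ! (i - 1) = x (Suc (i - 1))" using True by (intro L6_nth) auto
    then show ?thesis using True by (simp add: mk6_def)
  next
    case False then show ?thesis using x by (auto simp: mk6_def cube_iff)
  qed
qed
lemma L6_mk6: "length bs = 6 \<Longrightarrow> L6 (mk6 bs) = bs"
  by (rule nth_equalityI) (auto simp: L6_nth mk6_def)

lemma len6_cases: "length bs = 6 \<Longrightarrow> \<exists>b0 b1 b2 b3 b4 b5. bs = [b0,b1,b2,b3,b4,b5]"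
  by (simp add: length_Suc_conv numeral_eq_Suc) blast

lemma mk6_sig: assumes "length bs = 6" shows "mk6 (sig bs) = mk6 bs \<circ> s6"
proof -
  obtain b0 b1 b2 b3 b4 b5 where bs: "bs = [b0,b1,b2,b3,b4,b5]" using len6_cases[OF assms] by blast
  show ?thesis
  proof (rule ext9)
    fix i :: nat assume "i = 0 \<or> i = 1 \<or> i = 2 \<or> i = 3 \<or> i = 4 \<or> i = 5 \<or> i = 6 \<or> i = 7 \<or> i = 8 \<or> i = 9"
    then show "mk6 (sig bs) i = (mk6 bs \<circ> s6) i"
      by (elim disjE) (simp_all add: bs mk6_def sig_def s6_eq)
  next
    fix i :: nat assume "9 < i" then show "mk6 (sig bs) i = (mk6 bs \<circ> s6) i"
      by (simp add: mk6_def s6_eq)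
  qed
qed

lemma L6_s6: "L6 (x \<circ> s6) = sig (L6 x)"
  by (simp add: L6_def sig_def s6_eq upt_rec numeral_eq_Suc)

lemma mk6_mono: assumes "length bs = 6" shows "mk6 bs \<le> mk6 (bs[i := True])"
  using assms by (cases "i < length bs") (auto simp: mk6_def le_fun_def nth_list_update list_update_beyond)

lemma mono_from_cov:
  assumes cov: "\<And>bs i. length bs = n \<Longrightarrow> i < n \<Longrightarrow> \<not> bs ! i \<Longrightarrow> F bs \<le> (F (bs[i := True]) :: nat)"
  shows "length xs = n \<Longrightarrow> length ys = n \<Longrightarrow> (\<forall>i<n. xs ! i \<longrightarrow> ys ! i) \<Longrightarrow> F xs \<le> F ys"
proof (induction "card {i. i < n \<and> xs ! i \<noteq> ys ! i}" arbitrary: xs)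
  case 0
  have "finite {i. i < n \<and> xs ! i \<noteq> ys ! i}" by simp
  with 0 have "xs = ys" by (intro nth_equalityI) auto
  then show ?case by simp
next
  case (Suc m)
  then obtain i where i: "i < n" "xs ! i \<noteq> ys ! i"
    by (metis (mono_tags, lifting) card.empty empty_Collect_eq nat.distinct(1))
  then have xi: "\<not> xs ! i" "ys ! i" using Suc.prems by auto
  let ?xs = "xs[i := True]"
  have "{j. j < n \<and> ?xs ! j \<noteq> ys ! j} = {j. j < n \<and> xs ! j \<noteq> ys ! j} - {i}"
    using i xi Suc.prems by (auto simp: nth_list_update)
  then have "card {j. j < n \<and> ?xs ! j \<noteq> ys ! j} = m"
    using Suc.hyps(2) i by simp
  moreover have "\<forall>j<n. ?xs ! j \<longrightarrow> ys ! j" using Suc.prems xi i by (auto simp: nth_list_update)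
  ultimately have "F ?xs \<le> F ys"
    using Suc.hyps(1)[of ?xs] Suc.prems by simp
  moreover have "F xs \<le> F ?xs" using cov[of xs i] Suc.prems i xi by simp
  ultimately show ?case by simp
qed


definition cnt :: "bf \<times> bf \<times> bf \<times> bf \<Rightarrow> (nat \<Rightarrow> bool) \<Rightarrow> nat" where
  "cnt c x = (case c of (a1,a2,a3,a4) \<Rightarrow>
     (if a1 x then 1 else 0) + (if a2 x then 1 else 0) + (if a3 x then 1 else 0) + (if a4 x then 1 else 0))"
definition hh :: "bf \<times> bf \<times> bf \<times> bf \<Rightarrow> bool list \<Rightarrow> nat" where
  "hh c bs = cnt c (mk6 bs)"
definition blkh :: "bf \<times> bf \<times> bf \<times> bf \<Rightarrow> nat \<Rightarrow> dm" where
  "blkh c k = (hh c ([False,False] @ rep k), hh c ([True,False] @ rep k), hh c ([False,True] @ rep k), hh c ([True,True] @ rep k))"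
definition tup :: "bf \<times> bf \<times> bf \<times> bf \<Rightarrow> tu" where
  "tup c = (blkh c 0, blkh c 1, blkh c 2, blkh c 3, blkh c 4, blkh c 5)"

lemma cnt_le4: "cnt c x \<le> 4" by (cases c) (simp add: cnt_def)

lemma val_tup: assumes "length bs = 6" shows "val (tup c) bs = hh c (canon bs)"
proof -
  obtain b0 b1 b2 b3 b4 b5 where bs: "bs = [b0,b1,b2,b3,b4,b5]" using len6_cases[OF assms] by blast
  show ?thesis unfolding bs
    by (cases b0; cases b1; cases b2; cases b3; cases b4; cases b5) (simp_all add: val_def canon_def tup_def blkh_def)
qed

lemma chainsP6_in: "c \<in> chains P6 \<Longrightarrow> c = (a1,a2,a3,a4) \<Longrightarrow> a1 \<in> Phi 6 s6 \<and> a2 \<in> Phi 6 s6 \<and> a3 \<in> Phi 6 s6 \<and> a4 \<in> Phi 6 s6 \<and> a1 \<le> a2 \<and> a2 \<le> a3 \<and> a3 \<le> a4"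
  by (simp add: chains_def P6_def)

lemma hh_sig: assumes c: "c \<in> chains P6" and l: "length bs = 6" shows "hh c (sig bs) = hh c bs"
proof -
  obtain a1 a2 a3 a4 where ce: "c = (a1,a2,a3,a4)" by (cases c) auto
  note h = chainsP6_in[OF c ce]
  show ?thesis unfolding hh_def mk6_sig[OF l] ce cnt_def
    using Phi_inv[of a1 6 s6 "mk6 bs"] Phi_inv[of a2 6 s6 "mk6 bs"] Phi_inv[of a3 6 s6 "mk6 bs"] Phi_inv[of a4 6 s6 "mk6 bs"] h
    by simp
qed

lemma sig_len: "length (sig bs) = 6" by (simp add: sig_def)

lemma length6_nlists: "length bs = 6 \<Longrightarrow> bs \<in> set (List.n_lists 6 [True, False])"
  by (auto simp: set_n_lists)

lemma hh_canon: assumes c: "c \<in> chains P6" and l: "length bs = 6" shows "hh c (canon bs) = hh c bs"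
proof -
  have "canon bs \<in> {bs, sig bs, sig (sig bs), sig (sig (sig bs))}" using K1 length6_nlists[OF l] by blast
  then show ?thesis using hh_sig[OF c] l sig_len by auto
qed

lemma val_tup_hh: "c \<in> chains P6 \<Longrightarrow> length bs = 6 \<Longrightarrow> val (tup c) bs = hh c bs"
  by (simp add: val_tup hh_canon)

lemma hh_cov: assumes c: "c \<in> chains P6" and l: "length bs = 6" shows "hh c bs \<le> hh c (bs[i := True])"
proof -
  obtain a1 a2 a3 a4 where ce: "c = (a1,a2,a3,a4)" by (cases c) auto
  note h = chainsP6_in[OF c ce]
  have m: "a (mk6 bs) \<Longrightarrow> a (mk6 (bs[i := True]))" if "a \<in> Phi 6 s6" for a
    using D_mono[of a 6, OF _ mk6_cube mk6_cube mk6_mono[OF l]] that by (auto simp: Phi_def)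
  show ?thesis unfolding hh_def ce cnt_def using m h by (auto simp: add_mono)
qed

lemma tu_cases: obtains a0 b0 c0 d0 a1 b1 c1 d1 a2 b2 c2 d2 a3 b3 c3 d3 a4 b4 c4 d4 a5 b5 c5 d5
  where "v = ((a0,b0,c0,d0),(a1,b1,c1,d1),(a2,b2,c2,d2),(a3,b3,c3,d3),(a4,b4,c4,d4),(a5,b5,c5,d5))"
  by (metis prod.exhaust)

lemma tup_in_T: assumes c: "c \<in> chains P6" shows "tup c \<in> T"
proof -
  have cv: "covok (tup c)" unfolding covok_alt using hh_cov[OF c] val_tup_hh[OF c] by simp
  have s0: "hh c ([False,True] @ rep 0) = hh c ([True,False] @ rep 0)"
    using hh_sig[OF c, of "[True,False] @ rep 0"] by (simp add: sig_def rep_def)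
  have s5: "hh c ([False,True] @ rep 5) = hh c ([True,False] @ rep 5)"
    using hh_sig[OF c, of "[True,False] @ rep 5"] by (simp add: sig_def rep_def)
  obtain a0 b0 c0 d0 a1 b1 c1 d1 a2 b2 c2 d2 a3 b3 c3 d3 a4 b4 c4 d4 a5 b5 c5 d5
    where v: "tup c = ((a0,b0,c0,d0),(a1,b1,c1,d1),(a2,b2,c2,d2),(a3,b3,c3,d3),(a4,b4,c4,d4),(a5,b5,c5,d5))"
    by (rule tu_cases)
  have e: "c0 = b0" "c5 = b5" using v s0 s5 by (auto simp: tup_def blkh_def hh_def)
  have "d5 = hh c ([True,True] @ rep 5)" using v by (simp add: tup_def blkh_def)
  then have d: "d5 \<le> 4" using cnt_le4 by (simp add: hh_def)
  show ?thesis using covok_T[OF e d] cv v by metis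
qed


definition cut :: "tu \<Rightarrow> nat \<Rightarrow> bf" where
  "cut v t = (\<lambda>x. x \<in> cube 6 \<and> t \<le> val v (L6 x))"
definition ch :: "tu \<Rightarrow> bf \<times> bf \<times> bf \<times> bf" where
  "ch v = (cut v 4, cut v 3, cut v 2, cut v 1)"

lemma T_symb: assumes "v \<in> T" shows "symb v"
proof -
  obtain a0 b0 c0 d0 a1 b1 c1 d1 a2 b2 c2 d2 a3 b3 c3 d3 a4 b4 c4 d4 a5 b5 c5 d5
    where v: "v = ((a0,b0,c0,d0),(a1,b1,c1,d1),(a2,b2,c2,d2),(a3,b3,c3,d3),(a4,b4,c4,d4),(a5,b5,c5,d5))"
    by (rule tu_cases)
  show ?thesis using assms unfolding v T_def by (simp add: Sy_def)
qed

lemma T_covok': assumes "v \<in> T" shows "covok v"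
proof -
  obtain a0 b0 c0 d0 a1 b1 c1 d1 a2 b2 c2 d2 a3 b3 c3 d3 a4 b4 c4 d4 a5 b5 c5 d5
    where v: "v = ((a0,b0,c0,d0),(a1,b1,c1,d1),(a2,b2,c2,d2),(a3,b3,c3,d3),(a4,b4,c4,d4),(a5,b5,c5,d5))"
    by (rule tu_cases)
  show ?thesis using assms unfolding v by (rule T_covok)
qed

lemma T_sig: assumes "v \<in> T" "length bs = 6" shows "val v (sig bs) = val v bs"
proof -
  obtain a0 b0 c0 d0 a1 b1 c1 d1 a2 b2 c2 d2 a3 b3 c3 d3 a4 b4 c4 d4 a5 b5 c5 d5
    where v: "v = ((a0,b0,c0,d0),(a1,b1,c1,d1),(a2,b2,c2,d2),(a3,b3,c3,d3),(a4,b4,c4,d4),(a5,b5,c5,d5))"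
    by (rule tu_cases)
  show ?thesis using K2 T_symb[OF assms(1)] length6_nlists[OF assms(2)] unfolding v by blast
qed

lemma dget_le4: "g \<in> Dd \<or> g \<in> Sy \<Longrightarrow> dget g y1 y2 \<le> 4"
  by (cases g) (auto simp: Dd_def Sy_def)

lemma T_val_le4: assumes "v \<in> T" shows "val v bs \<le> 4"
proof -
  obtain a0 b0 c0 d0 a1 b1 c1 d1 a2 b2 c2 d2 a3 b3 c3 d3 a4 b4 c4 d4 a5 b5 c5 d5
    where v: "v = ((a0,b0,c0,d0),(a1,b1,c1,d1),(a2,b2,c2,d2),(a3,b3,c3,d3),(a4,b4,c4,d4),(a5,b5,c5,d5))"
    by (rule tu_cases)
  have "blkget v k \<in> Dd \<or> blkget v k \<in> Sy" for k using assms unfolding v T_def by auto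
  then show ?thesis using dget_le4 unfolding val_def by (auto split: prod.split)
qed

lemma T_mono: assumes v: "v \<in> T" and xy: "x \<le> y" shows "val v (L6 x) \<le> val v (L6 y)"
proof (rule mono_from_cov[where n = 6])
  show "val v bs \<le> val v (bs[i := True])" if "length bs = 6" "i < 6" "\<not> bs ! i" for bs i
    using T_covok'[OF v] that unfolding covok_alt by blast
  show "\<forall>i<6. L6 x ! i \<longrightarrow> L6 y ! i" using xy by (auto simp: L6_nth le_fun_def)
qed simp_all

lemma cut_P6: assumes v: "v \<in> T" shows "cut v t \<in> P6"
proof -
  have "cut v t \<in> D 6"
    unfolding D_def
  proof (intro CollectI conjI ballI impI allI)
    fix x y :: "nat \<Rightarrow> bool" assume "x \<in> cube 6" "y \<in> cube 6" "x \<le> y"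
    then show "cut v t x \<le> cut v t y" using T_mono[OF v, of x y] by (auto simp: cut_def)
  qed (simp add: cut_def)
  moreover have "act s6 (cut v t) = cut v t"
    by (rule ext) (simp add: act_def cut_def cube6_s6 L6_s6 T_sig[OF v])
  ultimately show ?thesis by (simp add: P6_def Phi_def)
qed

lemma ch_chain: assumes "v \<in> T" shows "ch v \<in> chains P6"
proof -
  have "cut v 4 \<le> cut v 3" "cut v 3 \<le> cut v 2" "cut v 2 \<le> cut v 1" by (auto simp: cut_def le_fun_def)
  then show ?thesis using cut_P6[OF assms] by (simp add: ch_def chains_def)
qed

lemma hh_ch: assumes v: "v \<in> T" and l: "length bs = 6" shows "hh (ch v) bs = val v bs"
  using T_val_le4[OF v, of bs] by (auto simp: hh_def ch_def cnt_def cut_def mk6_cube L6_mk6[OF l])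

lemma tup_ch: assumes v: "v \<in> T" shows "tup (ch v) = v"
proof -
  obtain a0 b0 c0 d0 a1 b1 c1 d1 a2 b2 c2 d2 a3 b3 c3 d3 a4 b4 c4 d4 a5 b5 c5 d5
    where ve: "v = ((a0,b0,c0,d0),(a1,b1,c1,d1),(a2,b2,c2,d2),(a3,b3,c3,d3),(a4,b4,c4,d4),(a5,b5,c5,d5))"
    by (rule tu_cases)
  have "length ([y1,y2] @ rep k) = 6" if "k \<le> 5" for y1 y2 k
    using that by (auto simp: rep_def le_Suc_eq numeral_eq_Suc)
  then have e: "hh (ch v) ([y1,y2] @ rep k) = val v ([y1,y2] @ rep k)" if "k \<le> 5" for y1 y2 k
    using hh_ch[OF v] that by blast
  show ?thesis unfolding tup_def blkh_def
    by (simp add: e del: append_Cons append_Nil) (simp add: ve val_def rep_def)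
qed

lemma cnt_chain:
  assumes c: "c \<in> chains P6" and ce: "c = (a1,a2,a3,a4)"
  shows "a1 x = (x \<in> cube 6 \<and> 4 \<le> cnt c x)" "a2 x = (x \<in> cube 6 \<and> 3 \<le> cnt c x)"
        "a3 x = (x \<in> cube 6 \<and> 2 \<le> cnt c x)" "a4 x = (x \<in> cube 6 \<and> 1 \<le> cnt c x)"
proof -
  note h = chainsP6_in[OF c ce]
  have D: "a1 \<in> D 6" "a2 \<in> D 6" "a3 \<in> D 6" "a4 \<in> D 6" using h by (auto simp: Phi_def)
  have o: "a1 x \<Longrightarrow> a2 x" "a2 x \<Longrightarrow> a3 x" "a3 x \<Longrightarrow> a4 x" using h by (auto simp: le_fun_def)
  show "a1 x = (x \<in> cube 6 \<and> 4 \<le> cnt c x)" "a2 x = (x \<in> cube 6 \<and> 3 \<le> cnt c x)"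
        "a3 x = (x \<in> cube 6 \<and> 2 \<le> cnt c x)" "a4 x = (x \<in> cube 6 \<and> 1 \<le> cnt c x)"
    using D_out[OF D(1), of x] D_out[OF D(2), of x] D_out[OF D(3), of x] D_out[OF D(4), of x] o
    by (auto simp: ce cnt_def)
qed

lemma ch_tup: assumes c: "c \<in> chains P6" shows "ch (tup c) = c"
proof -
  obtain a1 a2 a3 a4 where ce: "c = (a1,a2,a3,a4)" by (cases c) auto
  have cv: "cut (tup c) t x = (x \<in> cube 6 \<and> t \<le> cnt c x)" for t x
    by (auto simp: cut_def val_tup_hh[OF c] hh_def mk6_L6)
  show ?thesis unfolding ch_def using cnt_chain[OF c ce] cv ce by (auto intro!: ext)
qed

lemma partC1: "bij_betw tup (chains P6) T"
  by (rule bij_betw_byWitness[where f' = ch]) (auto simp: ch_tup tup_ch tup_in_T ch_chain)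



fun dmin :: "dm \<Rightarrow> dm \<Rightarrow> dm" where
  "dmin (a,b,c,d) (a',b',c',d') = (min a a', min b b', min c c', min d d')"
fun dmax :: "dm \<Rightarrow> dm \<Rightarrow> dm" where
  "dmax (a,b,c,d) (a',b',c',d') = (max a a', max b b', max c c', max d d')"
lemma dle_dmin: "dle x (dmin y z) \<longleftrightarrow> dle x y \<and> dle x z"
  by (cases x; cases y; cases z) auto
lemma dmax_dle: "dle (dmax y z) x \<longleftrightarrow> dle y x \<and> dle z x"
  by (cases x; cases y; cases z) auto

definition Dl :: "dm list" where "Dl = [(0,0,0,0), (0,0,0,1), (0,0,1,1), (0,1,0,1), (0,1,1,1), (1,1,1,1), (0,0,0,2), (0,0,1,2), (0,0,2,2), (0,1,0,2), (0,1,1,2), (1,1,1,2), (0,1,2,2), (1,1,2,2), (0,2,0,2), (0,2,1,2), (1,2,1,2), (0,2,2,2), (1,2,2,2), (2,2,2,2), (0,0,0,3), (0,0,1,3), (0,0,2,3), (0,0,3,3), (0,1,0,3), (0,1,1,3), (1,1,1,3), (0,1,2,3), (1,1,2,3), (0,1,3,3), (1,1,3,3), (0,2,0,3), (0,2,1,3), (1,2,1,3), (0,2,2,3), (1,2,2,3), (2,2,2,3), (0,2,3,3), (1,2,3,3), (2,2,3,3), (0,3,0,3), (0,3,1,3), (1,3,1,3), (0,3,2,3), (1,3,2,3), (2,3,2,3), (0,3,3,3), (1,3,3,3), (2,3,3,3), (3,3,3,3), (0,0,0,4), (0,0,1,4), (0,0,2,4), (0,0,3,4), (0,0,4,4), (0,1,0,4),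 (0,1,1,4), (1,1,1,4), (0,1,2,4), (1,1,2,4), (0,1,3,4), (1,1,3,4), (0,1,4,4), (1,1,4,4), (0,2,0,4), (0,2,1,4), (1,2,1,4), (0,2,2,4), (1,2,2,4), (2,2,2,4), (0,2,3,4), (1,2,3,4), (2,2,3,4), (0,2,4,4), (1,2,4,4), (2,2,4,4), (0,3,0,4), (0,3,1,4), (1,3,1,4), (0,3,2,4), (1,3,2,4), (2,3,2,4), (0,3,3,4), (1,3,3,4), (2,3,3,4), (3,3,3,4), (0,3,4,4), (1,3,4,4), (2,3,4,4), (3,3,4,4), (0,4,0,4), (0,4,1,4), (1,4,1,4), (0,4,2,4), (1,4,2,4), (2,4,2,4), (0,4,3,4), (1,4,3,4), (2,4,3,4), (3,4,3,4), (0,4,4,4), (1,4,4,4), (2,4,4,4), (3,4,4,4), (4,4,4,4)]"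
definition Syl :: "dm list" where "Syl = [(0,0,0,0), (0,0,0,1), (0,1,1,1), (1,1,1,1), (0,0,0,2), (0,1,1,2), (1,1,1,2), (0,2,2,2), (1,2,2,2), (2,2,2,2), (0,0,0,3), (0,1,1,3), (1,1,1,3), (0,2,2,3), (1,2,2,3), (2,2,2,3), (0,3,3,3), (1,3,3,3), (2,3,3,3), (3,3,3,3), (0,0,0,4), (0,1,1,4), (1,1,1,4), (0,2,2,4), (1,2,2,4), (2,2,2,4), (0,3,3,4), (1,3,3,4), (2,3,3,4), (3,3,3,4), (0,4,4,4), (1,4,4,4), (2,4,4,4), (3,4,4,4), (4,4,4,4)]"
definition Acnt :: "dm \<Rightarrow> nat" where "Acnt g = length (filter (\<lambda>s. dle s g) Syl)"
definition Bcnt :: "dm \<Rightarrow> nat" where "Bcnt g = length (filter (\<lambda>s. dle g s) Syl)"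
definition al :: "dm \<Rightarrow> nat" where "al m = card {(s0,g1). s0 \<in> Sy \<and> g1 \<in> Dd \<and> dle s0 g1 \<and> dle g1 m}"
definition be :: "dm \<Rightarrow> nat" where "be m = card {(g4,s5). g4 \<in> Dd \<and> s5 \<in> Sy \<and> dle m g4 \<and> dle g4 s5}"
definition row :: "dm \<Rightarrow> nat" where
  "row g2 = sum_list (map (\<lambda>g3. al (dmin (dmin g2 (sw g2)) g3) * be (dmax (dmax g2 (sw g2)) g3)) Dl)"

definition Dgen :: "dm list" where
  "Dgen = concat (map (\<lambda>d. concat (map (\<lambda>b. concat (map (\<lambda>c. map (\<lambda>a. (a,b,c,d)) [0..<Suc (min b c)]) [0..<Suc d])) [0..<Suc d])) [0..<5])"
lemma set_Dgen: "set Dgen = Dd"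
  unfolding Dgen_def Dd_def by (force simp: less_Suc_eq_le simp del: upt_Suc)
lemma Dgen_Dl: "Dgen = Dl"
  by (simp add: Dgen_def Dl_def upt_rec)
lemma set_Dl: "set Dl = Dd" using set_Dgen Dgen_Dl by simp
lemma distinct_Dl: "distinct Dl" by (simp add: Dl_def)
lemma set_Syl: "set Syl = Sy"
proof -
  have e: "Syl = filter (\<lambda>g. sw g = g) Dl" by (simp add: Syl_def Dl_def)
  have sw_eq: "sw (a,b,c,d) = (a,b,c,d) \<longleftrightarrow> c = b" for a b c d :: nat by auto
  have "x \<in> set Syl \<longleftrightarrow> x \<in> Sy" for x
    unfolding e set_filter set_Dl by (cases x) (simp add: sw_eq Dd_def Sy_def del: sw.simps, blast)
  then show ?thesis by blast
qed
lemma distinct_Syl: "distinct Syl" by (simp add: Syl_def)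
lemma fin_Dd: "finite Dd" using set_Dl by (metis List.finite_set)
lemma fin_Sy: "finite Sy" using set_Syl by (metis List.finite_set)

lemma card_filter_list: "distinct xs \<Longrightarrow> card {s \<in> set xs. P s} = length (filter P xs)"
  by (metis distinct_card distinct_filter set_filter)
lemma sum_filter_list: "distinct xs \<Longrightarrow> (\<Sum>g\<in>{g \<in> set xs. P g}. f g) = sum_list (map (\<lambda>g. if P g then f g else 0) xs)"
  by (simp add: sum.inter_filter[symmetric] sum_list_distinct_conv_sum_set)

lemma al_list: "al m = sum_list (map (\<lambda>g. if dle g m then Acnt g else 0) Dl)"
proof -
  have "{(s0,g1). s0 \<in> Sy \<and> g1 \<in> Dd \<and> dle s0 g1 \<and> dle g1 m} = (\<lambda>(g,s). (s,g)) ` (SIGMA g:{g \<in> Dd. dle g m}. {s \<in> Sy. dle s g})"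
    by auto
  then have "al m = card (SIGMA g:{g \<in> Dd. dle g m}. {s \<in> Sy. dle s g})"
    unfolding al_def by (metis (no_types, lifting) card_image inj_on_def prod.inject case_prod_beta swap_inj_on)
  also have "\<dots> = (\<Sum>g\<in>{g \<in> Dd. dle g m}. card {s \<in> Sy. dle s g})"
    using fin_Dd fin_Sy by (simp add: card_SigmaI)
  also have "\<dots> = (\<Sum>g\<in>{g \<in> set Dl. dle g m}. Acnt g)"
    unfolding set_Dl using card_filter_list[OF distinct_Syl] by (simp add: Acnt_def set_Syl)
  also have "\<dots> = sum_list (map (\<lambda>g. if dle g m then Acnt g else 0) Dl)"
    by (rule sum_filter_list[OF distinct_Dl])
  finally show ?thesis .
qed

lemma be_list: "be m = sum_list (map (\<lambda>g. if dle m g then Bcnt g else 0) Dl)"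
proof -
  have "be m = card (SIGMA g:{g \<in> Dd. dle m g}. {s \<in> Sy. dle g s})"
    unfolding be_def by (rule arg_cong[where f = card]) auto
  also have "\<dots> = (\<Sum>g\<in>{g \<in> Dd. dle m g}. card {s \<in> Sy. dle g s})"
    using fin_Dd fin_Sy by (simp add: card_SigmaI)
  also have "\<dots> = (\<Sum>g\<in>{g \<in> set Dl. dle m g}. Bcnt g)"
    unfolding set_Dl using card_filter_list[OF distinct_Syl] by (simp add: Bcnt_def set_Syl)
  also have "\<dots> = sum_list (map (\<lambda>g. if dle m g then Bcnt g else 0) Dl)"
    by (rule sum_filter_list[OF distinct_Dl])
  finally show ?thesis .
qed

definition Lo :: "dm \<Rightarrow> dm \<Rightarrow> (dm \<times> dm) set" where
  "Lo g2 g3 = {(s0,g1). s0 \<in> Sy \<and> g1 \<in> Dd \<and> dle s0 g1 \<and> dle g1 g2 \<and> dle g1 (sw g2) \<and> dle g1 g3}"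
definition Hi :: "dm \<Rightarrow> dm \<Rightarrow> (dm \<times> dm) set" where
  "Hi g2 g3 = {(g4,s5). g4 \<in> Dd \<and> s5 \<in> Sy \<and> dle g2 g4 \<and> dle (sw g2) g4 \<and> dle g3 g4 \<and> dle g4 s5}"

lemma card_Lo: "card (Lo g2 g3) = al (dmin (dmin g2 (sw g2)) g3)"
  unfolding al_def Lo_def by (simp add: dle_dmin conj_assoc)
lemma card_Hi: "card (Hi g2 g3) = be (dmax (dmax g2 (sw g2)) g3)"
  unfolding be_def Hi_def by (rule arg_cong[where f = card]) (auto simp: dmax_dle)

lemma fin_Lo: "finite (Lo g2 g3)"
  by (rule finite_subset[of _ "Sy \<times> Dd"]) (auto simp: Lo_def fin_Sy fin_Dd)
lemma fin_Hi: "finite (Hi g2 g3)"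
  by (rule finite_subset[of _ "Dd \<times> Sy"]) (auto simp: Hi_def fin_Sy fin_Dd)

lemma mem_T: "(s0,g1,g2,g3,g4,s5) \<in> T \<longleftrightarrow> g2 \<in> Dd \<and> g3 \<in> Dd \<and> (s0,g1) \<in> Lo g2 g3 \<and> (g4,s5) \<in> Hi g2 g3"
  unfolding T_def Lo_def Hi_def by (simp only: mem_Collect_eq prod.case) blast

lemma card_T_sum: "card T = sum_list (map row Dl)"
proof -
  define f :: "(dm \<times> dm) \<times> (dm \<times> dm) \<times> (dm \<times> dm) \<Rightarrow> tu"
    where "f = (\<lambda>(p, q, r). (fst q, snd q, fst p, snd p, fst r, snd r))"
  let ?S = "SIGMA p:(Dd \<times> Dd). Lo (fst p) (snd p) \<times> Hi (fst p) (snd p)"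
  have Teq: "T = f ` ?S"
  proof (rule set_eqI)
    fix v :: tu
    obtain s0 g1 g2 g3 g4 s5 where v: "v = (s0,g1,g2,g3,g4,s5)" by (metis prod.exhaust)
    have "v \<in> f ` ?S \<longleftrightarrow> ((g2,g3),(s0,g1),(g4,s5)) \<in> ?S"
    proof
      assume "v \<in> f ` ?S"
      then obtain x where x: "x \<in> ?S" "v = f x" by blast
      obtain p q r where xe: "x = (p, q, r)" by (metis prod.exhaust)
      have "p = (g2,g3)" "q = (s0,g1)" "r = (g4,s5)" using x(2) unfolding xe v f_def by (simp_all add: prod_eq_iff)
      then show "((g2,g3),(s0,g1),(g4,s5)) \<in> ?S" using x(1) xe by simp
    next
      assume "((g2,g3),(s0,g1),(g4,s5)) \<in> ?S"
      moreover have "v = f ((g2,g3),(s0,g1),(g4,s5))" unfolding v f_def by simp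
      ultimately show "v \<in> f ` ?S" by blast
    qed
    also have "\<dots> \<longleftrightarrow> v \<in> T" unfolding v mem_T by simp
    finally show "v \<in> T \<longleftrightarrow> v \<in> f ` ?S" by simp
  qed
  have inj: "inj_on f ?S"
  proof (rule inj_onI)
    fix x y assume "x \<in> ?S" "y \<in> ?S" "f x = f y"
    then show "x = y" unfolding f_def by (cases x; cases y) (simp add: prod_eq_iff)
  qed
  have "card T = card ?S" unfolding Teq using inj by (rule card_image)
  also have "\<dots> = (\<Sum>p\<in>Dd \<times> Dd. card (Lo (fst p) (snd p) \<times> Hi (fst p) (snd p)))"
    using fin_Dd fin_Lo fin_Hi by (intro card_SigmaI) auto
  also have "\<dots> = (\<Sum>p\<in>Dd \<times> Dd. card (Lo (fst p) (snd p)) * card (Hi (fst p) (snd p)))"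
    by (simp only: card_cartesian_product)
  also have "\<dots> = (\<Sum>g2\<in>Dd. \<Sum>g3\<in>Dd. card (Lo g2 g3) * card (Hi g2 g3))"
    unfolding sum.cartesian_product by (simp add: split_def)
  also have "\<dots> = sum_list (map row Dl)"
    unfolding row_def card_Lo card_Hi set_Dl[symmetric]
    by (simp add: sum_list_distinct_conv_sum_set[OF distinct_Dl])
  finally show ?thesis .
qed
lemma Acnt_0_0_0_0[simp]: "Acnt (0,0,0,0) = 1" by (simp add: Acnt_def Syl_def del: One_nat_def)
lemma Bcnt_0_0_0_0[simp]: "Bcnt (0,0,0,0) = 35" by (simp add: Bcnt_def Syl_def del: One_nat_def)
lemma Acnt_0_0_0_1[simp]: "Acnt (0,0,0,1) = 2" by (simp add: Acnt_def Syl_def del: One_nat_def)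
lemma Bcnt_0_0_0_1[simp]: "Bcnt (0,0,0,1) = 34" by (simp add: Bcnt_def Syl_def del: One_nat_def)
lemma Acnt_0_0_1_1[simp]: "Acnt (0,0,1,1) = 2" by (simp add: Acnt_def Syl_def del: One_nat_def)
lemma Bcnt_0_0_1_1[simp]: "Bcnt (0,0,1,1) = 30" by (simp add: Bcnt_def Syl_def del: One_nat_def)
lemma Acnt_0_1_0_1[simp]: "Acnt (0,1,0,1) = 2" by (simp add: Acnt_def Syl_def del: One_nat_def)
lemma Bcnt_0_1_0_1[simp]: "Bcnt (0,1,0,1) = 30" by (simp add: Bcnt_def Syl_def del: One_nat_def)
lemma Acnt_0_1_1_1[simp]: "Acnt (0,1,1,1) = 3" by (simp add: Acnt_def Syl_def del: One_nat_def)
lemma Bcnt_0_1_1_1[simp]: "Bcnt (0,1,1,1) = 30" by (simp add: Bcnt_def Syl_def del: One_nat_def)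
lemma Acnt_1_1_1_1[simp]: "Acnt (1,1,1,1) = 4" by (simp add: Acnt_def Syl_def del: One_nat_def)
lemma Bcnt_1_1_1_1[simp]: "Bcnt (1,1,1,1) = 20" by (simp add: Bcnt_def Syl_def del: One_nat_def)
lemma Acnt_0_0_0_2[simp]: "Acnt (0,0,0,2) = 3" by (simp add: Acnt_def Syl_def del: One_nat_def)
lemma Bcnt_0_0_0_2[simp]: "Bcnt (0,0,0,2) = 31" by (simp add: Bcnt_def Syl_def del: One_nat_def)
lemma Acnt_0_0_1_2[simp]: "Acnt (0,0,1,2) = 3" by (simp add: Acnt_def Syl_def del: One_nat_def)
lemma Bcnt_0_0_1_2[simp]: "Bcnt (0,0,1,2) = 28" by (simp add: Bcnt_def Syl_def del: One_nat_def)
lemma Acnt_0_0_2_2[simp]: "Acnt (0,0,2,2) = 3" by (simp add: Acnt_def Syl_def del: One_nat_def)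
lemma Bcnt_0_0_2_2[simp]: "Bcnt (0,0,2,2) = 22" by (simp add: Bcnt_def Syl_def del: One_nat_def)
lemma Acnt_0_1_0_2[simp]: "Acnt (0,1,0,2) = 3" by (simp add: Acnt_def Syl_def del: One_nat_def)
lemma Bcnt_0_1_0_2[simp]: "Bcnt (0,1,0,2) = 28" by (simp add: Bcnt_def Syl_def del: One_nat_def)
lemma Acnt_0_1_1_2[simp]: "Acnt (0,1,1,2) = 5" by (simp add: Acnt_def Syl_def del: One_nat_def)
lemma Bcnt_0_1_1_2[simp]: "Bcnt (0,1,1,2) = 28" by (simp add: Bcnt_def Syl_def del: One_nat_def)
lemma Acnt_1_1_1_2[simp]: "Acnt (1,1,1,2) = 7" by (simp add: Acnt_def Syl_def del: One_nat_def)
lemma Bcnt_1_1_1_2[simp]: "Bcnt (1,1,1,2) = 19" by (simp add: Bcnt_def Syl_def del: One_nat_def)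
lemma Acnt_0_1_2_2[simp]: "Acnt (0,1,2,2) = 5" by (simp add: Acnt_def Syl_def del: One_nat_def)
lemma Bcnt_0_1_2_2[simp]: "Bcnt (0,1,2,2) = 22" by (simp add: Bcnt_def Syl_def del: One_nat_def)
lemma Acnt_1_1_2_2[simp]: "Acnt (1,1,2,2) = 7" by (simp add: Acnt_def Syl_def del: One_nat_def)
lemma Bcnt_1_1_2_2[simp]: "Bcnt (1,1,2,2) = 16" by (simp add: Bcnt_def Syl_def del: One_nat_def)
lemma Acnt_0_2_0_2[simp]: "Acnt (0,2,0,2) = 3" by (simp add: Acnt_def Syl_def del: One_nat_def)
lemma Bcnt_0_2_0_2[simp]: "Bcnt (0,2,0,2) = 22" by (simp add: Bcnt_def Syl_def del: One_nat_def)
lemma Acnt_0_2_1_2[simp]: "Acnt (0,2,1,2) = 5" by (simp add: Acnt_def Syl_def del: One_nat_def)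
lemma Bcnt_0_2_1_2[simp]: "Bcnt (0,2,1,2) = 22" by (simp add: Bcnt_def Syl_def del: One_nat_def)
lemma Acnt_1_2_1_2[simp]: "Acnt (1,2,1,2) = 7" by (simp add: Acnt_def Syl_def del: One_nat_def)
lemma Bcnt_1_2_1_2[simp]: "Bcnt (1,2,1,2) = 16" by (simp add: Bcnt_def Syl_def del: One_nat_def)
lemma Acnt_0_2_2_2[simp]: "Acnt (0,2,2,2) = 6" by (simp add: Acnt_def Syl_def del: One_nat_def)
lemma Bcnt_0_2_2_2[simp]: "Bcnt (0,2,2,2) = 22" by (simp add: Bcnt_def Syl_def del: One_nat_def)
lemma Acnt_1_2_2_2[simp]: "Acnt (1,2,2,2) = 9" by (simp add: Acnt_def Syl_def del: One_nat_def)
lemma Bcnt_1_2_2_2[simp]: "Bcnt (1,2,2,2) = 16" by (simp add: Bcnt_def Syl_def del: One_nat_def)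
lemma Acnt_2_2_2_2[simp]: "Acnt (2,2,2,2) = 10" by (simp add: Acnt_def Syl_def del: One_nat_def)
lemma Bcnt_2_2_2_2[simp]: "Bcnt (2,2,2,2) = 10" by (simp add: Bcnt_def Syl_def del: One_nat_def)
lemma Acnt_0_0_0_3[simp]: "Acnt (0,0,0,3) = 4" by (simp add: Acnt_def Syl_def del: One_nat_def)
lemma Bcnt_0_0_0_3[simp]: "Bcnt (0,0,0,3) = 25" by (simp add: Bcnt_def Syl_def del: One_nat_def)
lemma Acnt_0_0_1_3[simp]: "Acnt (0,0,1,3) = 4" by (simp add: Acnt_def Syl_def del: One_nat_def)
lemma Bcnt_0_0_1_3[simp]: "Bcnt (0,0,1,3) = 23" by (simp add: Bcnt_def Syl_def del: One_nat_def)
lemma Acnt_0_0_2_3[simp]: "Acnt (0,0,2,3) = 4" by (simp add: Acnt_def Syl_def del: One_nat_def)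
lemma Bcnt_0_0_2_3[simp]: "Bcnt (0,0,2,3) = 19" by (simp add: Bcnt_def Syl_def del: One_nat_def)
lemma Acnt_0_0_3_3[simp]: "Acnt (0,0,3,3) = 4" by (simp add: Acnt_def Syl_def del: One_nat_def)
lemma Bcnt_0_0_3_3[simp]: "Bcnt (0,0,3,3) = 13" by (simp add: Bcnt_def Syl_def del: One_nat_def)
lemma Acnt_0_1_0_3[simp]: "Acnt (0,1,0,3) = 4" by (simp add: Acnt_def Syl_def del: One_nat_def)
lemma Bcnt_0_1_0_3[simp]: "Bcnt (0,1,0,3) = 23" by (simp add: Bcnt_def Syl_def del: One_nat_def)
lemma Acnt_0_1_1_3[simp]: "Acnt (0,1,1,3) = 7" by (simp add: Acnt_def Syl_def del: One_nat_def)
lemma Bcnt_0_1_1_3[simp]: "Bcnt (0,1,1,3) = 23" by (simp add: Bcnt_def Syl_def del: One_nat_def)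
lemma Acnt_1_1_1_3[simp]: "Acnt (1,1,1,3) = 10" by (simp add: Acnt_def Syl_def del: One_nat_def)
lemma Bcnt_1_1_1_3[simp]: "Bcnt (1,1,1,3) = 16" by (simp add: Bcnt_def Syl_def del: One_nat_def)
lemma Acnt_0_1_2_3[simp]: "Acnt (0,1,2,3) = 7" by (simp add: Acnt_def Syl_def del: One_nat_def)
lemma Bcnt_0_1_2_3[simp]: "Bcnt (0,1,2,3) = 19" by (simp add: Bcnt_def Syl_def del: One_nat_def)
lemma Acnt_1_1_2_3[simp]: "Acnt (1,1,2,3) = 10" by (simp add: Acnt_def Syl_def del: One_nat_def)
lemma Bcnt_1_1_2_3[simp]: "Bcnt (1,1,2,3) = 14" by (simp add: Bcnt_def Syl_def del: One_nat_def)
lemma Acnt_0_1_3_3[simp]: "Acnt (0,1,3,3) = 7" by (simp add: Acnt_def Syl_def del: One_nat_def)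
lemma Bcnt_0_1_3_3[simp]: "Bcnt (0,1,3,3) = 13" by (simp add: Bcnt_def Syl_def del: One_nat_def)
lemma Acnt_1_1_3_3[simp]: "Acnt (1,1,3,3) = 10" by (simp add: Acnt_def Syl_def del: One_nat_def)
lemma Bcnt_1_1_3_3[simp]: "Bcnt (1,1,3,3) = 10" by (simp add: Bcnt_def Syl_def del: One_nat_def)
lemma Acnt_0_2_0_3[simp]: "Acnt (0,2,0,3) = 4" by (simp add: Acnt_def Syl_def del: One_nat_def)
lemma Bcnt_0_2_0_3[simp]: "Bcnt (0,2,0,3) = 19" by (simp add: Bcnt_def Syl_def del: One_nat_def)
lemma Acnt_0_2_1_3[simp]: "Acnt (0,2,1,3) = 7" by (simp add: Acnt_def Syl_def del: One_nat_def)
lemma Bcnt_0_2_1_3[simp]: "Bcnt (0,2,1,3) = 19" by (simp add: Bcnt_def Syl_def del: One_nat_def)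
lemma Acnt_1_2_1_3[simp]: "Acnt (1,2,1,3) = 10" by (simp add: Acnt_def Syl_def del: One_nat_def)
lemma Bcnt_1_2_1_3[simp]: "Bcnt (1,2,1,3) = 14" by (simp add: Bcnt_def Syl_def del: One_nat_def)
lemma Acnt_0_2_2_3[simp]: "Acnt (0,2,2,3) = 9" by (simp add: Acnt_def Syl_def del: One_nat_def)
lemma Bcnt_0_2_2_3[simp]: "Bcnt (0,2,2,3) = 19" by (simp add: Bcnt_def Syl_def del: One_nat_def)
lemma Acnt_1_2_2_3[simp]: "Acnt (1,2,2,3) = 14" by (simp add: Acnt_def Syl_def del: One_nat_def)
lemma Bcnt_1_2_2_3[simp]: "Bcnt (1,2,2,3) = 14" by (simp add: Bcnt_def Syl_def del: One_nat_def)
lemma Acnt_2_2_2_3[simp]: "Acnt (2,2,2,3) = 16" by (simp add: Acnt_def Syl_def del: One_nat_def)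
lemma Bcnt_2_2_2_3[simp]: "Bcnt (2,2,2,3) = 9" by (simp add: Bcnt_def Syl_def del: One_nat_def)
lemma Acnt_0_2_3_3[simp]: "Acnt (0,2,3,3) = 9" by (simp add: Acnt_def Syl_def del: One_nat_def)
lemma Bcnt_0_2_3_3[simp]: "Bcnt (0,2,3,3) = 13" by (simp add: Bcnt_def Syl_def del: One_nat_def)
lemma Acnt_1_2_3_3[simp]: "Acnt (1,2,3,3) = 14" by (simp add: Acnt_def Syl_def del: One_nat_def)
lemma Bcnt_1_2_3_3[simp]: "Bcnt (1,2,3,3) = 10" by (simp add: Bcnt_def Syl_def del: One_nat_def)
lemma Acnt_2_2_3_3[simp]: "Acnt (2,2,3,3) = 16" by (simp add: Acnt_def Syl_def del: One_nat_def)
lemma Bcnt_2_2_3_3[simp]: "Bcnt (2,2,3,3) = 7" by (simp add: Bcnt_def Syl_def del: One_nat_def)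
lemma Acnt_0_3_0_3[simp]: "Acnt (0,3,0,3) = 4" by (simp add: Acnt_def Syl_def del: One_nat_def)
lemma Bcnt_0_3_0_3[simp]: "Bcnt (0,3,0,3) = 13" by (simp add: Bcnt_def Syl_def del: One_nat_def)
lemma Acnt_0_3_1_3[simp]: "Acnt (0,3,1,3) = 7" by (simp add: Acnt_def Syl_def del: One_nat_def)
lemma Bcnt_0_3_1_3[simp]: "Bcnt (0,3,1,3) = 13" by (simp add: Bcnt_def Syl_def del: One_nat_def)
lemma Acnt_1_3_1_3[simp]: "Acnt (1,3,1,3) = 10" by (simp add: Acnt_def Syl_def del: One_nat_def)
lemma Bcnt_1_3_1_3[simp]: "Bcnt (1,3,1,3) = 10" by (simp add: Bcnt_def Syl_def del: One_nat_def)
lemma Acnt_0_3_2_3[simp]: "Acnt (0,3,2,3) = 9" by (simp add: Acnt_def Syl_def del: One_nat_def)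
lemma Bcnt_0_3_2_3[simp]: "Bcnt (0,3,2,3) = 13" by (simp add: Bcnt_def Syl_def del: One_nat_def)
lemma Acnt_1_3_2_3[simp]: "Acnt (1,3,2,3) = 14" by (simp add: Acnt_def Syl_def del: One_nat_def)
lemma Bcnt_1_3_2_3[simp]: "Bcnt (1,3,2,3) = 10" by (simp add: Bcnt_def Syl_def del: One_nat_def)
lemma Acnt_2_3_2_3[simp]: "Acnt (2,3,2,3) = 16" by (simp add: Acnt_def Syl_def del: One_nat_def)
lemma Bcnt_2_3_2_3[simp]: "Bcnt (2,3,2,3) = 7" by (simp add: Bcnt_def Syl_def del: One_nat_def)
lemma Acnt_0_3_3_3[simp]: "Acnt (0,3,3,3) = 10" by (simp add: Acnt_def Syl_def del: One_nat_def)
lemma Bcnt_0_3_3_3[simp]: "Bcnt (0,3,3,3) = 13" by (simp add: Bcnt_def Syl_def del: One_nat_def)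
lemma Acnt_1_3_3_3[simp]: "Acnt (1,3,3,3) = 16" by (simp add: Acnt_def Syl_def del: One_nat_def)
lemma Bcnt_1_3_3_3[simp]: "Bcnt (1,3,3,3) = 10" by (simp add: Bcnt_def Syl_def del: One_nat_def)
lemma Acnt_2_3_3_3[simp]: "Acnt (2,3,3,3) = 19" by (simp add: Acnt_def Syl_def del: One_nat_def)
lemma Bcnt_2_3_3_3[simp]: "Bcnt (2,3,3,3) = 7" by (simp add: Bcnt_def Syl_def del: One_nat_def)
lemma Acnt_3_3_3_3[simp]: "Acnt (3,3,3,3) = 20" by (simp add: Acnt_def Syl_def del: One_nat_def)
lemma Bcnt_3_3_3_3[simp]: "Bcnt (3,3,3,3) = 4" by (simp add: Bcnt_def Syl_def del: One_nat_def)
lemma Acnt_0_0_0_4[simp]: "Acnt (0,0,0,4) = 5" by (simp add: Acnt_def Syl_def del: One_nat_def)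
lemma Bcnt_0_0_0_4[simp]: "Bcnt (0,0,0,4) = 15" by (simp add: Bcnt_def Syl_def del: One_nat_def)
lemma Acnt_0_0_1_4[simp]: "Acnt (0,0,1,4) = 5" by (simp add: Acnt_def Syl_def del: One_nat_def)
lemma Bcnt_0_0_1_4[simp]: "Bcnt (0,0,1,4) = 14" by (simp add: Bcnt_def Syl_def del: One_nat_def)
lemma Acnt_0_0_2_4[simp]: "Acnt (0,0,2,4) = 5" by (simp add: Acnt_def Syl_def del: One_nat_def)
lemma Bcnt_0_0_2_4[simp]: "Bcnt (0,0,2,4) = 12" by (simp add: Bcnt_def Syl_def del: One_nat_def)
lemma Acnt_0_0_3_4[simp]: "Acnt (0,0,3,4) = 5" by (simp add: Acnt_def Syl_def del: One_nat_def)
lemma Bcnt_0_0_3_4[simp]: "Bcnt (0,0,3,4) = 9" by (simp add: Bcnt_def Syl_def del: One_nat_def)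
lemma Acnt_0_0_4_4[simp]: "Acnt (0,0,4,4) = 5" by (simp add: Acnt_def Syl_def del: One_nat_def)
lemma Bcnt_0_0_4_4[simp]: "Bcnt (0,0,4,4) = 5" by (simp add: Bcnt_def Syl_def del: One_nat_def)
lemma Acnt_0_1_0_4[simp]: "Acnt (0,1,0,4) = 5" by (simp add: Acnt_def Syl_def del: One_nat_def)
lemma Bcnt_0_1_0_4[simp]: "Bcnt (0,1,0,4) = 14" by (simp add: Bcnt_def Syl_def del: One_nat_def)
lemma Acnt_0_1_1_4[simp]: "Acnt (0,1,1,4) = 9" by (simp add: Acnt_def Syl_def del: One_nat_def)
lemma Bcnt_0_1_1_4[simp]: "Bcnt (0,1,1,4) = 14" by (simp add: Bcnt_def Syl_def del: One_nat_def)
lemma Acnt_1_1_1_4[simp]: "Acnt (1,1,1,4) = 13" by (simp add: Acnt_def Syl_def del: One_nat_def)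
lemma Bcnt_1_1_1_4[simp]: "Bcnt (1,1,1,4) = 10" by (simp add: Bcnt_def Syl_def del: One_nat_def)
lemma Acnt_0_1_2_4[simp]: "Acnt (0,1,2,4) = 9" by (simp add: Acnt_def Syl_def del: One_nat_def)
lemma Bcnt_0_1_2_4[simp]: "Bcnt (0,1,2,4) = 12" by (simp add: Bcnt_def Syl_def del: One_nat_def)
lemma Acnt_1_1_2_4[simp]: "Acnt (1,1,2,4) = 13" by (simp add: Acnt_def Syl_def del: One_nat_def)
lemma Bcnt_1_1_2_4[simp]: "Bcnt (1,1,2,4) = 9" by (simp add: Bcnt_def Syl_def del: One_nat_def)
lemma Acnt_0_1_3_4[simp]: "Acnt (0,1,3,4) = 9" by (simp add: Acnt_def Syl_def del: One_nat_def)
lemma Bcnt_0_1_3_4[simp]: "Bcnt (0,1,3,4) = 9" by (simp add: Bcnt_def Syl_def del: One_nat_def)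
lemma Acnt_1_1_3_4[simp]: "Acnt (1,1,3,4) = 13" by (simp add: Acnt_def Syl_def del: One_nat_def)
lemma Bcnt_1_1_3_4[simp]: "Bcnt (1,1,3,4) = 7" by (simp add: Bcnt_def Syl_def del: One_nat_def)
lemma Acnt_0_1_4_4[simp]: "Acnt (0,1,4,4) = 9" by (simp add: Acnt_def Syl_def del: One_nat_def)
lemma Bcnt_0_1_4_4[simp]: "Bcnt (0,1,4,4) = 5" by (simp add: Bcnt_def Syl_def del: One_nat_def)
lemma Acnt_1_1_4_4[simp]: "Acnt (1,1,4,4) = 13" by (simp add: Acnt_def Syl_def del: One_nat_def)
lemma Bcnt_1_1_4_4[simp]: "Bcnt (1,1,4,4) = 4" by (simp add: Bcnt_def Syl_def del: One_nat_def)
lemma Acnt_0_2_0_4[simp]: "Acnt (0,2,0,4) = 5" by (simp add: Acnt_def Syl_def del: One_nat_def)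
lemma Bcnt_0_2_0_4[simp]: "Bcnt (0,2,0,4) = 12" by (simp add: Bcnt_def Syl_def del: One_nat_def)
lemma Acnt_0_2_1_4[simp]: "Acnt (0,2,1,4) = 9" by (simp add: Acnt_def Syl_def del: One_nat_def)
lemma Bcnt_0_2_1_4[simp]: "Bcnt (0,2,1,4) = 12" by (simp add: Bcnt_def Syl_def del: One_nat_def)
lemma Acnt_1_2_1_4[simp]: "Acnt (1,2,1,4) = 13" by (simp add: Acnt_def Syl_def del: One_nat_def)
lemma Bcnt_1_2_1_4[simp]: "Bcnt (1,2,1,4) = 9" by (simp add: Bcnt_def Syl_def del: One_nat_def)
lemma Acnt_0_2_2_4[simp]: "Acnt (0,2,2,4) = 12" by (simp add: Acnt_def Syl_def del: One_nat_def)
lemma Bcnt_0_2_2_4[simp]: "Bcnt (0,2,2,4) = 12" by (simp add: Bcnt_def Syl_def del: One_nat_def)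
lemma Acnt_1_2_2_4[simp]: "Acnt (1,2,2,4) = 19" by (simp add: Acnt_def Syl_def del: One_nat_def)
lemma Bcnt_1_2_2_4[simp]: "Bcnt (1,2,2,4) = 9" by (simp add: Bcnt_def Syl_def del: One_nat_def)
lemma Acnt_2_2_2_4[simp]: "Acnt (2,2,2,4) = 22" by (simp add: Acnt_def Syl_def del: One_nat_def)
lemma Bcnt_2_2_2_4[simp]: "Bcnt (2,2,2,4) = 6" by (simp add: Bcnt_def Syl_def del: One_nat_def)
lemma Acnt_0_2_3_4[simp]: "Acnt (0,2,3,4) = 12" by (simp add: Acnt_def Syl_def del: One_nat_def)
lemma Bcnt_0_2_3_4[simp]: "Bcnt (0,2,3,4) = 9" by (simp add: Bcnt_def Syl_def del: One_nat_def)
lemma Acnt_1_2_3_4[simp]: "Acnt (1,2,3,4) = 19" by (simp add: Acnt_def Syl_def del: One_nat_def)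
lemma Bcnt_1_2_3_4[simp]: "Bcnt (1,2,3,4) = 7" by (simp add: Bcnt_def Syl_def del: One_nat_def)
lemma Acnt_2_2_3_4[simp]: "Acnt (2,2,3,4) = 22" by (simp add: Acnt_def Syl_def del: One_nat_def)
lemma Bcnt_2_2_3_4[simp]: "Bcnt (2,2,3,4) = 5" by (simp add: Bcnt_def Syl_def del: One_nat_def)
lemma Acnt_0_2_4_4[simp]: "Acnt (0,2,4,4) = 12" by (simp add: Acnt_def Syl_def del: One_nat_def)
lemma Bcnt_0_2_4_4[simp]: "Bcnt (0,2,4,4) = 5" by (simp add: Bcnt_def Syl_def del: One_nat_def)
lemma Acnt_1_2_4_4[simp]: "Acnt (1,2,4,4) = 19" by (simp add: Acnt_def Syl_def del: One_nat_def)
lemma Bcnt_1_2_4_4[simp]: "Bcnt (1,2,4,4) = 4" by (simp add: Bcnt_def Syl_def del: One_nat_def)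
lemma Acnt_2_2_4_4[simp]: "Acnt (2,2,4,4) = 22" by (simp add: Acnt_def Syl_def del: One_nat_def)
lemma Bcnt_2_2_4_4[simp]: "Bcnt (2,2,4,4) = 3" by (simp add: Bcnt_def Syl_def del: One_nat_def)
lemma Acnt_0_3_0_4[simp]: "Acnt (0,3,0,4) = 5" by (simp add: Acnt_def Syl_def del: One_nat_def)
lemma Bcnt_0_3_0_4[simp]: "Bcnt (0,3,0,4) = 9" by (simp add: Bcnt_def Syl_def del: One_nat_def)
lemma Acnt_0_3_1_4[simp]: "Acnt (0,3,1,4) = 9" by (simp add: Acnt_def Syl_def del: One_nat_def)
lemma Bcnt_0_3_1_4[simp]: "Bcnt (0,3,1,4) = 9" by (simp add: Bcnt_def Syl_def del: One_nat_def)
lemma Acnt_1_3_1_4[simp]: "Acnt (1,3,1,4) = 13" by (simp add: Acnt_def Syl_def del: One_nat_def)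
lemma Bcnt_1_3_1_4[simp]: "Bcnt (1,3,1,4) = 7" by (simp add: Bcnt_def Syl_def del: One_nat_def)
lemma Acnt_0_3_2_4[simp]: "Acnt (0,3,2,4) = 12" by (simp add: Acnt_def Syl_def del: One_nat_def)
lemma Bcnt_0_3_2_4[simp]: "Bcnt (0,3,2,4) = 9" by (simp add: Bcnt_def Syl_def del: One_nat_def)
lemma Acnt_1_3_2_4[simp]: "Acnt (1,3,2,4) = 19" by (simp add: Acnt_def Syl_def del: One_nat_def)
lemma Bcnt_1_3_2_4[simp]: "Bcnt (1,3,2,4) = 7" by (simp add: Bcnt_def Syl_def del: One_nat_def)
lemma Acnt_2_3_2_4[simp]: "Acnt (2,3,2,4) = 22" by (simp add: Acnt_def Syl_def del: One_nat_def)
lemma Bcnt_2_3_2_4[simp]: "Bcnt (2,3,2,4) = 5" by (simp add: Bcnt_def Syl_def del: One_nat_def)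
lemma Acnt_0_3_3_4[simp]: "Acnt (0,3,3,4) = 14" by (simp add: Acnt_def Syl_def del: One_nat_def)
lemma Bcnt_0_3_3_4[simp]: "Bcnt (0,3,3,4) = 9" by (simp add: Bcnt_def Syl_def del: One_nat_def)
lemma Acnt_1_3_3_4[simp]: "Acnt (1,3,3,4) = 23" by (simp add: Acnt_def Syl_def del: One_nat_def)
lemma Bcnt_1_3_3_4[simp]: "Bcnt (1,3,3,4) = 7" by (simp add: Bcnt_def Syl_def del: One_nat_def)
lemma Acnt_2_3_3_4[simp]: "Acnt (2,3,3,4) = 28" by (simp add: Acnt_def Syl_def del: One_nat_def)
lemma Bcnt_2_3_3_4[simp]: "Bcnt (2,3,3,4) = 5" by (simp add: Bcnt_def Syl_def del: One_nat_def)
lemma Acnt_3_3_3_4[simp]: "Acnt (3,3,3,4) = 30" by (simp add: Acnt_def Syl_def del: One_nat_def)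
lemma Bcnt_3_3_3_4[simp]: "Bcnt (3,3,3,4) = 3" by (simp add: Bcnt_def Syl_def del: One_nat_def)
lemma Acnt_0_3_4_4[simp]: "Acnt (0,3,4,4) = 14" by (simp add: Acnt_def Syl_def del: One_nat_def)
lemma Bcnt_0_3_4_4[simp]: "Bcnt (0,3,4,4) = 5" by (simp add: Bcnt_def Syl_def del: One_nat_def)
lemma Acnt_1_3_4_4[simp]: "Acnt (1,3,4,4) = 23" by (simp add: Acnt_def Syl_def del: One_nat_def)
lemma Bcnt_1_3_4_4[simp]: "Bcnt (1,3,4,4) = 4" by (simp add: Bcnt_def Syl_def del: One_nat_def)
lemma Acnt_2_3_4_4[simp]: "Acnt (2,3,4,4) = 28" by (simp add: Acnt_def Syl_def del: One_nat_def)
lemma Bcnt_2_3_4_4[simp]: "Bcnt (2,3,4,4) = 3" by (simp add: Bcnt_def Syl_def del: One_nat_def)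
lemma Acnt_3_3_4_4[simp]: "Acnt (3,3,4,4) = 30" by (simp add: Acnt_def Syl_def del: One_nat_def)
lemma Bcnt_3_3_4_4[simp]: "Bcnt (3,3,4,4) = 2" by (simp add: Bcnt_def Syl_def del: One_nat_def)
lemma Acnt_0_4_0_4[simp]: "Acnt (0,4,0,4) = 5" by (simp add: Acnt_def Syl_def del: One_nat_def)
lemma Bcnt_0_4_0_4[simp]: "Bcnt (0,4,0,4) = 5" by (simp add: Bcnt_def Syl_def del: One_nat_def)
lemma Acnt_0_4_1_4[simp]: "Acnt (0,4,1,4) = 9" by (simp add: Acnt_def Syl_def del: One_nat_def)
lemma Bcnt_0_4_1_4[simp]: "Bcnt (0,4,1,4) = 5" by (simp add: Bcnt_def Syl_def del: One_nat_def)
lemma Acnt_1_4_1_4[simp]: "Acnt (1,4,1,4) = 13" by (simp add: Acnt_def Syl_def del: One_nat_def)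
lemma Bcnt_1_4_1_4[simp]: "Bcnt (1,4,1,4) = 4" by (simp add: Bcnt_def Syl_def del: One_nat_def)
lemma Acnt_0_4_2_4[simp]: "Acnt (0,4,2,4) = 12" by (simp add: Acnt_def Syl_def del: One_nat_def)
lemma Bcnt_0_4_2_4[simp]: "Bcnt (0,4,2,4) = 5" by (simp add: Bcnt_def Syl_def del: One_nat_def)
lemma Acnt_1_4_2_4[simp]: "Acnt (1,4,2,4) = 19" by (simp add: Acnt_def Syl_def del: One_nat_def)
lemma Bcnt_1_4_2_4[simp]: "Bcnt (1,4,2,4) = 4" by (simp add: Bcnt_def Syl_def del: One_nat_def)
lemma Acnt_2_4_2_4[simp]: "Acnt (2,4,2,4) = 22" by (simp add: Acnt_def Syl_def del: One_nat_def)
lemma Bcnt_2_4_2_4[simp]: "Bcnt (2,4,2,4) = 3" by (simp add: Bcnt_def Syl_def del: One_nat_def)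
lemma Acnt_0_4_3_4[simp]: "Acnt (0,4,3,4) = 14" by (simp add: Acnt_def Syl_def del: One_nat_def)
lemma Bcnt_0_4_3_4[simp]: "Bcnt (0,4,3,4) = 5" by (simp add: Bcnt_def Syl_def del: One_nat_def)
lemma Acnt_1_4_3_4[simp]: "Acnt (1,4,3,4) = 23" by (simp add: Acnt_def Syl_def del: One_nat_def)
lemma Bcnt_1_4_3_4[simp]: "Bcnt (1,4,3,4) = 4" by (simp add: Bcnt_def Syl_def del: One_nat_def)
lemma Acnt_2_4_3_4[simp]: "Acnt (2,4,3,4) = 28" by (simp add: Acnt_def Syl_def del: One_nat_def)
lemma Bcnt_2_4_3_4[simp]: "Bcnt (2,4,3,4) = 3" by (simp add: Bcnt_def Syl_def del: One_nat_def)
lemma Acnt_3_4_3_4[simp]: "Acnt (3,4,3,4) = 30" by (simp add: Acnt_def Syl_def del: One_nat_def)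
lemma Bcnt_3_4_3_4[simp]: "Bcnt (3,4,3,4) = 2" by (simp add: Bcnt_def Syl_def del: One_nat_def)
lemma Acnt_0_4_4_4[simp]: "Acnt (0,4,4,4) = 15" by (simp add: Acnt_def Syl_def del: One_nat_def)
lemma Bcnt_0_4_4_4[simp]: "Bcnt (0,4,4,4) = 5" by (simp add: Bcnt_def Syl_def del: One_nat_def)
lemma Acnt_1_4_4_4[simp]: "Acnt (1,4,4,4) = 25" by (simp add: Acnt_def Syl_def del: One_nat_def)
lemma Bcnt_1_4_4_4[simp]: "Bcnt (1,4,4,4) = 4" by (simp add: Bcnt_def Syl_def del: One_nat_def)
lemma Acnt_2_4_4_4[simp]: "Acnt (2,4,4,4) = 31" by (simp add: Acnt_def Syl_def del: One_nat_def)
lemma Bcnt_2_4_4_4[simp]: "Bcnt (2,4,4,4) = 3" by (simp add: Bcnt_def Syl_def del: One_nat_def)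
lemma Acnt_3_4_4_4[simp]: "Acnt (3,4,4,4) = 34" by (simp add: Acnt_def Syl_def del: One_nat_def)
lemma Bcnt_3_4_4_4[simp]: "Bcnt (3,4,4,4) = 2" by (simp add: Bcnt_def Syl_def del: One_nat_def)
lemma Acnt_4_4_4_4[simp]: "Acnt (4,4,4,4) = 35" by (simp add: Acnt_def Syl_def del: One_nat_def)
lemma Bcnt_4_4_4_4[simp]: "Bcnt (4,4,4,4) = 1" by (simp add: Bcnt_def Syl_def del: One_nat_def)
lemma al_0_0_0_0[simp]: "al (0,0,0,0) = 1" by (simp add: al_list Dl_def del: One_nat_def)
lemma be_0_0_0_0[simp]: "be (0,0,0,0) = 1274" by (simp add: be_list Dl_def del: One_nat_def)
lemma al_0_0_0_1[simp]: "al (0,0,0,1) = 3" by (simp add: al_list Dl_def del: One_nat_def)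
lemma be_0_0_0_1[simp]: "be (0,0,0,1) = 1239" by (simp add: be_list Dl_def del: One_nat_def)
lemma al_0_0_1_1[simp]: "al (0,0,1,1) = 5" by (simp add: al_list Dl_def del: One_nat_def)
lemma be_0_0_1_1[simp]: "be (0,0,1,1) = 959" by (simp add: be_list Dl_def del: One_nat_def)
lemma al_0_1_0_1[simp]: "al (0,1,0,1) = 5" by (simp add: al_list Dl_def del: One_nat_def)
lemma be_0_1_0_1[simp]: "be (0,1,0,1) = 959" by (simp add: be_list Dl_def del: One_nat_def)
lemma al_0_1_1_1[simp]: "al (0,1,1,1) = 10" by (simp add: al_list Dl_def del: One_nat_def)
lemma be_0_1_1_1[simp]: "be (0,1,1,1) = 784" by (simp add: be_list Dl_def del: One_nat_def)
lemma al_1_1_1_1[simp]: "al (1,1,1,1) = 14" by (simp add: al_list Dl_def del: One_nat_def)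
lemma be_1_1_1_1[simp]: "be (1,1,1,1) = 385" by (simp add: be_list Dl_def del: One_nat_def)
lemma al_0_0_0_2[simp]: "al (0,0,0,2) = 6" by (simp add: al_list Dl_def del: One_nat_def)
lemma be_0_0_0_2[simp]: "be (0,0,0,2) = 1095" by (simp add: be_list Dl_def del: One_nat_def)
lemma al_0_0_1_2[simp]: "al (0,0,1,2) = 11" by (simp add: al_list Dl_def del: One_nat_def)
lemma be_0_0_1_2[simp]: "be (0,0,1,2) = 879" by (simp add: be_list Dl_def del: One_nat_def)
lemma al_0_0_2_2[simp]: "al (0,0,2,2) = 14" by (simp add: al_list Dl_def del: One_nat_def)
lemma be_0_0_2_2[simp]: "be (0,0,2,2) = 564" by (simp add: be_list Dl_def del: One_nat_def)
lemma al_0_1_0_2[simp]: "al (0,1,0,2) = 11" by (simp add: al_list Dl_def del: One_nat_def)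
lemma be_0_1_0_2[simp]: "be (0,1,0,2) = 879" by (simp add: be_list Dl_def del: One_nat_def)
lemma al_0_1_1_2[simp]: "al (0,1,1,2) = 24" by (simp add: al_list Dl_def del: One_nat_def)
lemma be_0_1_1_2[simp]: "be (0,1,1,2) = 734" by (simp add: be_list Dl_def del: One_nat_def)
lemma al_1_1_1_2[simp]: "al (1,1,1,2) = 35" by (simp add: al_list Dl_def del: One_nat_def)
lemma be_1_1_1_2[simp]: "be (1,1,1,2) = 365" by (simp add: be_list Dl_def del: One_nat_def)
lemma al_0_1_2_2[simp]: "al (0,1,2,2) = 32" by (simp add: al_list Dl_def del: One_nat_def)
lemma be_0_1_2_2[simp]: "be (0,1,2,2) = 484" by (simp add: be_list Dl_def del: One_nat_def)
lemma al_1_1_2_2[simp]: "al (1,1,2,2) = 50" by (simp add: al_list Dl_def del: One_nat_def)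
lemma be_1_1_2_2[simp]: "be (1,1,2,2) = 260" by (simp add: be_list Dl_def del: One_nat_def)
lemma al_0_2_0_2[simp]: "al (0,2,0,2) = 14" by (simp add: al_list Dl_def del: One_nat_def)
lemma be_0_2_0_2[simp]: "be (0,2,0,2) = 564" by (simp add: be_list Dl_def del: One_nat_def)
lemma al_0_2_1_2[simp]: "al (0,2,1,2) = 32" by (simp add: al_list Dl_def del: One_nat_def)
lemma be_0_2_1_2[simp]: "be (0,2,1,2) = 484" by (simp add: be_list Dl_def del: One_nat_def)
lemma al_1_2_1_2[simp]: "al (1,2,1,2) = 50" by (simp add: al_list Dl_def del: One_nat_def)
lemma be_1_2_1_2[simp]: "be (1,2,1,2) = 260" by (simp add: be_list Dl_def del: One_nat_def)
lemma al_0_2_2_2[simp]: "al (0,2,2,2) = 46" by (simp add: al_list Dl_def del: One_nat_def)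
lemma be_0_2_2_2[simp]: "be (0,2,2,2) = 344" by (simp add: be_list Dl_def del: One_nat_def)
lemma al_1_2_2_2[simp]: "al (1,2,2,2) = 80" by (simp add: al_list Dl_def del: One_nat_def)
lemma be_1_2_2_2[simp]: "be (1,2,2,2) = 200" by (simp add: be_list Dl_def del: One_nat_def)
lemma al_2_2_2_2[simp]: "al (2,2,2,2) = 90" by (simp add: al_list Dl_def del: One_nat_def)
lemma be_2_2_2_2[simp]: "be (2,2,2,2) = 90" by (simp add: be_list Dl_def del: One_nat_def)
lemma al_0_0_0_3[simp]: "al (0,0,0,3) = 10" by (simp add: al_list Dl_def del: One_nat_def)
lemma be_0_0_0_3[simp]: "be (0,0,0,3) = 793" by (simp add: be_list Dl_def del: One_nat_def)
lemma al_0_0_1_3[simp]: "al (0,0,1,3) = 19" by (simp add: al_list Dl_def del: One_nat_def)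
lemma be_0_0_1_3[simp]: "be (0,0,1,3) = 658" by (simp add: be_list Dl_def del: One_nat_def)
lemma al_0_0_2_3[simp]: "al (0,0,2,3) = 26" by (simp add: al_list Dl_def del: One_nat_def)
lemma be_0_0_2_3[simp]: "be (0,0,2,3) = 456" by (simp add: be_list Dl_def del: One_nat_def)
lemma al_0_0_3_3[simp]: "al (0,0,3,3) = 30" by (simp add: al_list Dl_def del: One_nat_def)
lemma be_0_0_3_3[simp]: "be (0,0,3,3) = 239" by (simp add: be_list Dl_def del: One_nat_def)
lemma al_0_1_0_3[simp]: "al (0,1,0,3) = 19" by (simp add: al_list Dl_def del: One_nat_def)
lemma be_0_1_0_3[simp]: "be (0,1,0,3) = 658" by (simp add: be_list Dl_def del: One_nat_def)
lemma al_0_1_1_3[simp]: "al (0,1,1,3) = 43" by (simp add: al_list Dl_def del: One_nat_def)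
lemma be_0_1_1_3[simp]: "be (0,1,1,3) = 563" by (simp add: be_list Dl_def del: One_nat_def)
lemma al_1_1_1_3[simp]: "al (1,1,1,3) = 64" by (simp add: al_list Dl_def del: One_nat_def)
lemma be_1_1_1_3[simp]: "be (1,1,1,3) = 288" by (simp add: be_list Dl_def del: One_nat_def)
lemma al_0_1_2_3[simp]: "al (0,1,2,3) = 62" by (simp add: al_list Dl_def del: One_nat_def)
lemma be_0_1_2_3[simp]: "be (0,1,2,3) = 398" by (simp add: be_list Dl_def del: One_nat_def)
lemma al_1_1_2_3[simp]: "al (1,1,2,3) = 100" by (simp add: al_list Dl_def del: One_nat_def)
lemma be_1_1_2_3[simp]: "be (1,1,2,3) = 218" by (simp add: be_list Dl_def del: One_nat_def)
lemma al_0_1_3_3[simp]: "al (0,1,3,3) = 73" by (simp add: al_list Dl_def del: One_nat_def)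
lemma be_0_1_3_3[simp]: "be (0,1,3,3) = 212" by (simp add: be_list Dl_def del: One_nat_def)
lemma al_1_1_3_3[simp]: "al (1,1,3,3) = 121" by (simp add: al_list Dl_def del: One_nat_def)
lemma be_1_1_3_3[simp]: "be (1,1,3,3) = 121" by (simp add: be_list Dl_def del: One_nat_def)
lemma al_0_2_0_3[simp]: "al (0,2,0,3) = 26" by (simp add: al_list Dl_def del: One_nat_def)
lemma be_0_2_0_3[simp]: "be (0,2,0,3) = 456" by (simp add: be_list Dl_def del: One_nat_def)
lemma al_0_2_1_3[simp]: "al (0,2,1,3) = 62" by (simp add: al_list Dl_def del: One_nat_def)
lemma be_0_2_1_3[simp]: "be (0,2,1,3) = 398" by (simp add: be_list Dl_def del: One_nat_def)
lemma al_1_2_1_3[simp]: "al (1,2,1,3) = 100" by (simp add: al_list Dl_def del: One_nat_def)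
lemma be_1_2_1_3[simp]: "be (1,2,1,3) = 218" by (simp add: be_list Dl_def del: One_nat_def)
lemma al_0_2_2_3[simp]: "al (0,2,2,3) = 96" by (simp add: al_list Dl_def del: One_nat_def)
lemma be_0_2_2_3[simp]: "be (0,2,2,3) = 296" by (simp add: be_list Dl_def del: One_nat_def)
lemma al_1_2_2_3[simp]: "al (1,2,2,3) = 174" by (simp add: al_list Dl_def del: One_nat_def)
lemma be_1_2_2_3[simp]: "be (1,2,2,3) = 174" by (simp add: be_list Dl_def del: One_nat_def)
lemma al_2_2_2_3[simp]: "al (2,2,2,3) = 200" by (simp add: al_list Dl_def del: One_nat_def)
lemma be_2_2_2_3[simp]: "be (2,2,2,3) = 80" by (simp add: be_list Dl_def del: One_nat_def)
lemma al_0_2_3_3[simp]: "al (0,2,3,3) = 116" by (simp add: al_list Dl_def del: One_nat_def)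
lemma be_0_2_3_3[simp]: "be (0,2,3,3) = 164" by (simp add: be_list Dl_def del: One_nat_def)
lemma al_1_2_3_3[simp]: "al (1,2,3,3) = 218" by (simp add: al_list Dl_def del: One_nat_def)
lemma be_1_2_3_3[simp]: "be (1,2,3,3) = 100" by (simp add: be_list Dl_def del: One_nat_def)
lemma al_2_2_3_3[simp]: "al (2,2,3,3) = 260" by (simp add: al_list Dl_def del: One_nat_def)
lemma be_2_2_3_3[simp]: "be (2,2,3,3) = 50" by (simp add: be_list Dl_def del: One_nat_def)
lemma al_0_3_0_3[simp]: "al (0,3,0,3) = 30" by (simp add: al_list Dl_def del: One_nat_def)
lemma be_0_3_0_3[simp]: "be (0,3,0,3) = 239" by (simp add: be_list Dl_def del: One_nat_def)
lemma al_0_3_1_3[simp]: "al (0,3,1,3) = 73" by (simp add: al_list Dl_def del: One_nat_def)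
lemma be_0_3_1_3[simp]: "be (0,3,1,3) = 212" by (simp add: be_list Dl_def del: One_nat_def)
lemma al_1_3_1_3[simp]: "al (1,3,1,3) = 121" by (simp add: al_list Dl_def del: One_nat_def)
lemma be_1_3_1_3[simp]: "be (1,3,1,3) = 121" by (simp add: be_list Dl_def del: One_nat_def)
lemma al_0_3_2_3[simp]: "al (0,3,2,3) = 116" by (simp add: al_list Dl_def del: One_nat_def)
lemma be_0_3_2_3[simp]: "be (0,3,2,3) = 164" by (simp add: be_list Dl_def del: One_nat_def)
lemma al_1_3_2_3[simp]: "al (1,3,2,3) = 218" by (simp add: al_list Dl_def del: One_nat_def)
lemma be_1_3_2_3[simp]: "be (1,3,2,3) = 100" by (simp add: be_list Dl_def del: One_nat_def)
lemma al_2_3_2_3[simp]: "al (2,3,2,3) = 260" by (simp add: al_list Dl_def del: One_nat_def)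
lemma be_2_3_2_3[simp]: "be (2,3,2,3) = 50" by (simp add: be_list Dl_def del: One_nat_def)
lemma al_0_3_3_3[simp]: "al (0,3,3,3) = 146" by (simp add: al_list Dl_def del: One_nat_def)
lemma be_0_3_3_3[simp]: "be (0,3,3,3) = 101" by (simp add: be_list Dl_def del: One_nat_def)
lemma al_1_3_3_3[simp]: "al (1,3,3,3) = 288" by (simp add: al_list Dl_def del: One_nat_def)
lemma be_1_3_3_3[simp]: "be (1,3,3,3) = 64" by (simp add: be_list Dl_def del: One_nat_def)
lemma al_2_3_3_3[simp]: "al (2,3,3,3) = 365" by (simp add: al_list Dl_def del: One_nat_def)
lemma be_2_3_3_3[simp]: "be (2,3,3,3) = 35" by (simp add: be_list Dl_def del: One_nat_def)
lemma al_3_3_3_3[simp]: "al (3,3,3,3) = 385" by (simp add: al_list Dl_def del: One_nat_def)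
lemma be_3_3_3_3[simp]: "be (3,3,3,3) = 14" by (simp add: be_list Dl_def del: One_nat_def)
lemma al_0_0_0_4[simp]: "al (0,0,0,4) = 15" by (simp add: al_list Dl_def del: One_nat_def)
lemma be_0_0_0_4[simp]: "be (0,0,0,4) = 371" by (simp add: be_list Dl_def del: One_nat_def)
lemma al_0_0_1_4[simp]: "al (0,0,1,4) = 29" by (simp add: al_list Dl_def del: One_nat_def)
lemma be_0_0_1_4[simp]: "be (0,0,1,4) = 316" by (simp add: be_list Dl_def del: One_nat_def)
lemma al_0_0_2_4[simp]: "al (0,0,2,4) = 41" by (simp add: al_list Dl_def del: One_nat_def)
lemma be_0_0_2_4[simp]: "be (0,0,2,4) = 232" by (simp add: be_list Dl_def del: One_nat_def)
lemma al_0_0_3_4[simp]: "al (0,0,3,4) = 50" by (simp add: al_list Dl_def del: One_nat_def)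
lemma be_0_0_3_4[simp]: "be (0,0,3,4) = 139" by (simp add: be_list Dl_def del: One_nat_def)
lemma al_0_0_4_4[simp]: "al (0,0,4,4) = 55" by (simp add: al_list Dl_def del: One_nat_def)
lemma be_0_0_4_4[simp]: "be (0,0,4,4) = 55" by (simp add: be_list Dl_def del: One_nat_def)
lemma al_0_1_0_4[simp]: "al (0,1,0,4) = 29" by (simp add: al_list Dl_def del: One_nat_def)
lemma be_0_1_0_4[simp]: "be (0,1,0,4) = 316" by (simp add: be_list Dl_def del: One_nat_def)
lemma al_0_1_1_4[simp]: "al (0,1,1,4) = 67" by (simp add: al_list Dl_def del: One_nat_def)
lemma be_0_1_1_4[simp]: "be (0,1,1,4) = 276" by (simp add: be_list Dl_def del: One_nat_def)
lemma al_1_1_1_4[simp]: "al (1,1,1,4) = 101" by (simp add: al_list Dl_def del: One_nat_def)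
lemma be_1_1_1_4[simp]: "be (1,1,1,4) = 146" by (simp add: be_list Dl_def del: One_nat_def)
lemma al_0_1_2_4[simp]: "al (0,1,2,4) = 100" by (simp add: al_list Dl_def del: One_nat_def)
lemma be_0_1_2_4[simp]: "be (0,1,2,4) = 206" by (simp add: be_list Dl_def del: One_nat_def)
lemma al_1_1_2_4[simp]: "al (1,1,2,4) = 164" by (simp add: al_list Dl_def del: One_nat_def)
lemma be_1_1_2_4[simp]: "be (1,1,2,4) = 116" by (simp add: be_list Dl_def del: One_nat_def)
lemma al_0_1_3_4[simp]: "al (0,1,3,4) = 125" by (simp add: al_list Dl_def del: One_nat_def)
lemma be_0_1_3_4[simp]: "be (0,1,3,4) = 125" by (simp add: be_list Dl_def del: One_nat_def)
lemma al_1_1_3_4[simp]: "al (1,1,3,4) = 212" by (simp add: al_list Dl_def del: One_nat_def)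
lemma be_1_1_3_4[simp]: "be (1,1,3,4) = 73" by (simp add: be_list Dl_def del: One_nat_def)
lemma al_0_1_4_4[simp]: "al (0,1,4,4) = 139" by (simp add: al_list Dl_def del: One_nat_def)
lemma be_0_1_4_4[simp]: "be (0,1,4,4) = 50" by (simp add: be_list Dl_def del: One_nat_def)
lemma al_1_1_4_4[simp]: "al (1,1,4,4) = 239" by (simp add: al_list Dl_def del: One_nat_def)
lemma be_1_1_4_4[simp]: "be (1,1,4,4) = 30" by (simp add: be_list Dl_def del: One_nat_def)
lemma al_0_2_0_4[simp]: "al (0,2,0,4) = 41" by (simp add: al_list Dl_def del: One_nat_def)
lemma be_0_2_0_4[simp]: "be (0,2,0,4) = 232" by (simp add: be_list Dl_def del: One_nat_def)
lemma al_0_2_1_4[simp]: "al (0,2,1,4) = 100" by (simp add: al_list Dl_def del: One_nat_def)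
lemma be_0_2_1_4[simp]: "be (0,2,1,4) = 206" by (simp add: be_list Dl_def del: One_nat_def)
lemma al_1_2_1_4[simp]: "al (1,2,1,4) = 164" by (simp add: al_list Dl_def del: One_nat_def)
lemma be_1_2_1_4[simp]: "be (1,2,1,4) = 116" by (simp add: be_list Dl_def del: One_nat_def)
lemma al_0_2_2_4[simp]: "al (0,2,2,4) = 160" by (simp add: al_list Dl_def del: One_nat_def)
lemma be_0_2_2_4[simp]: "be (0,2,2,4) = 160" by (simp add: be_list Dl_def del: One_nat_def)
lemma al_1_2_2_4[simp]: "al (1,2,2,4) = 296" by (simp add: al_list Dl_def del: One_nat_def)
lemma be_1_2_2_4[simp]: "be (1,2,2,4) = 96" by (simp add: be_list Dl_def del: One_nat_def)
lemma al_2_2_2_4[simp]: "al (2,2,2,4) = 344" by (simp add: al_list Dl_def del: One_nat_def)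
lemma be_2_2_2_4[simp]: "be (2,2,2,4) = 46" by (simp add: be_list Dl_def del: One_nat_def)
lemma al_0_2_3_4[simp]: "al (0,2,3,4) = 206" by (simp add: al_list Dl_def del: One_nat_def)
lemma be_0_2_3_4[simp]: "be (0,2,3,4) = 100" by (simp add: be_list Dl_def del: One_nat_def)
lemma al_1_2_3_4[simp]: "al (1,2,3,4) = 398" by (simp add: al_list Dl_def del: One_nat_def)
lemma be_1_2_3_4[simp]: "be (1,2,3,4) = 62" by (simp add: be_list Dl_def del: One_nat_def)
lemma al_2_2_3_4[simp]: "al (2,2,3,4) = 484" by (simp add: al_list Dl_def del: One_nat_def)
lemma be_2_2_3_4[simp]: "be (2,2,3,4) = 32" by (simp add: be_list Dl_def del: One_nat_def)
lemma al_0_2_4_4[simp]: "al (0,2,4,4) = 232" by (simp add: al_list Dl_def del: One_nat_def)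
lemma be_0_2_4_4[simp]: "be (0,2,4,4) = 41" by (simp add: be_list Dl_def del: One_nat_def)
lemma al_1_2_4_4[simp]: "al (1,2,4,4) = 456" by (simp add: al_list Dl_def del: One_nat_def)
lemma be_1_2_4_4[simp]: "be (1,2,4,4) = 26" by (simp add: be_list Dl_def del: One_nat_def)
lemma al_2_2_4_4[simp]: "al (2,2,4,4) = 564" by (simp add: al_list Dl_def del: One_nat_def)
lemma be_2_2_4_4[simp]: "be (2,2,4,4) = 14" by (simp add: be_list Dl_def del: One_nat_def)
lemma al_0_3_0_4[simp]: "al (0,3,0,4) = 50" by (simp add: al_list Dl_def del: One_nat_def)
lemma be_0_3_0_4[simp]: "be (0,3,0,4) = 139" by (simp add: be_list Dl_def del: One_nat_def)
lemma al_0_3_1_4[simp]: "al (0,3,1,4) = 125" by (simp add: al_list Dl_def del: One_nat_def)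
lemma be_0_3_1_4[simp]: "be (0,3,1,4) = 125" by (simp add: be_list Dl_def del: One_nat_def)
lemma al_1_3_1_4[simp]: "al (1,3,1,4) = 212" by (simp add: al_list Dl_def del: One_nat_def)
lemma be_1_3_1_4[simp]: "be (1,3,1,4) = 73" by (simp add: be_list Dl_def del: One_nat_def)
lemma al_0_3_2_4[simp]: "al (0,3,2,4) = 206" by (simp add: al_list Dl_def del: One_nat_def)
lemma be_0_3_2_4[simp]: "be (0,3,2,4) = 100" by (simp add: be_list Dl_def del: One_nat_def)
lemma al_1_3_2_4[simp]: "al (1,3,2,4) = 398" by (simp add: al_list Dl_def del: One_nat_def)
lemma be_1_3_2_4[simp]: "be (1,3,2,4) = 62" by (simp add: be_list Dl_def del: One_nat_def)
lemma al_2_3_2_4[simp]: "al (2,3,2,4) = 484" by (simp add: al_list Dl_def del: One_nat_def)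
lemma be_2_3_2_4[simp]: "be (2,3,2,4) = 32" by (simp add: be_list Dl_def del: One_nat_def)
lemma al_0_3_3_4[simp]: "al (0,3,3,4) = 276" by (simp add: al_list Dl_def del: One_nat_def)
lemma be_0_3_3_4[simp]: "be (0,3,3,4) = 67" by (simp add: be_list Dl_def del: One_nat_def)
lemma al_1_3_3_4[simp]: "al (1,3,3,4) = 563" by (simp add: al_list Dl_def del: One_nat_def)
lemma be_1_3_3_4[simp]: "be (1,3,3,4) = 43" by (simp add: be_list Dl_def del: One_nat_def)
lemma al_2_3_3_4[simp]: "al (2,3,3,4) = 734" by (simp add: al_list Dl_def del: One_nat_def)
lemma be_2_3_3_4[simp]: "be (2,3,3,4) = 24" by (simp add: be_list Dl_def del: One_nat_def)
lemma al_3_3_3_4[simp]: "al (3,3,3,4) = 784" by (simp add: al_list Dl_def del: One_nat_def)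
lemma be_3_3_3_4[simp]: "be (3,3,3,4) = 10" by (simp add: be_list Dl_def del: One_nat_def)
lemma al_0_3_4_4[simp]: "al (0,3,4,4) = 316" by (simp add: al_list Dl_def del: One_nat_def)
lemma be_0_3_4_4[simp]: "be (0,3,4,4) = 29" by (simp add: be_list Dl_def del: One_nat_def)
lemma al_1_3_4_4[simp]: "al (1,3,4,4) = 658" by (simp add: al_list Dl_def del: One_nat_def)
lemma be_1_3_4_4[simp]: "be (1,3,4,4) = 19" by (simp add: be_list Dl_def del: One_nat_def)
lemma al_2_3_4_4[simp]: "al (2,3,4,4) = 879" by (simp add: al_list Dl_def del: One_nat_def)
lemma be_2_3_4_4[simp]: "be (2,3,4,4) = 11" by (simp add: be_list Dl_def del: One_nat_def)
lemma al_3_3_4_4[simp]: "al (3,3,4,4) = 959" by (simp add: al_list Dl_def del: One_nat_def)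
lemma be_3_3_4_4[simp]: "be (3,3,4,4) = 5" by (simp add: be_list Dl_def del: One_nat_def)
lemma al_0_4_0_4[simp]: "al (0,4,0,4) = 55" by (simp add: al_list Dl_def del: One_nat_def)
lemma be_0_4_0_4[simp]: "be (0,4,0,4) = 55" by (simp add: be_list Dl_def del: One_nat_def)
lemma al_0_4_1_4[simp]: "al (0,4,1,4) = 139" by (simp add: al_list Dl_def del: One_nat_def)
lemma be_0_4_1_4[simp]: "be (0,4,1,4) = 50" by (simp add: be_list Dl_def del: One_nat_def)
lemma al_1_4_1_4[simp]: "al (1,4,1,4) = 239" by (simp add: al_list Dl_def del: One_nat_def)
lemma be_1_4_1_4[simp]: "be (1,4,1,4) = 30" by (simp add: be_list Dl_def del: One_nat_def)
lemma al_0_4_2_4[simp]: "al (0,4,2,4) = 232" by (simp add: al_list Dl_def del: One_nat_def)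
lemma be_0_4_2_4[simp]: "be (0,4,2,4) = 41" by (simp add: be_list Dl_def del: One_nat_def)
lemma al_1_4_2_4[simp]: "al (1,4,2,4) = 456" by (simp add: al_list Dl_def del: One_nat_def)
lemma be_1_4_2_4[simp]: "be (1,4,2,4) = 26" by (simp add: be_list Dl_def del: One_nat_def)
lemma al_2_4_2_4[simp]: "al (2,4,2,4) = 564" by (simp add: al_list Dl_def del: One_nat_def)
lemma be_2_4_2_4[simp]: "be (2,4,2,4) = 14" by (simp add: be_list Dl_def del: One_nat_def)
lemma al_0_4_3_4[simp]: "al (0,4,3,4) = 316" by (simp add: al_list Dl_def del: One_nat_def)
lemma be_0_4_3_4[simp]: "be (0,4,3,4) = 29" by (simp add: be_list Dl_def del: One_nat_def)
lemma al_1_4_3_4[simp]: "al (1,4,3,4) = 658" by (simp add: al_list Dl_def del: One_nat_def)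
lemma be_1_4_3_4[simp]: "be (1,4,3,4) = 19" by (simp add: be_list Dl_def del: One_nat_def)
lemma al_2_4_3_4[simp]: "al (2,4,3,4) = 879" by (simp add: al_list Dl_def del: One_nat_def)
lemma be_2_4_3_4[simp]: "be (2,4,3,4) = 11" by (simp add: be_list Dl_def del: One_nat_def)
lemma al_3_4_3_4[simp]: "al (3,4,3,4) = 959" by (simp add: al_list Dl_def del: One_nat_def)
lemma be_3_4_3_4[simp]: "be (3,4,3,4) = 5" by (simp add: be_list Dl_def del: One_nat_def)
lemma al_0_4_4_4[simp]: "al (0,4,4,4) = 371" by (simp add: al_list Dl_def del: One_nat_def)
lemma be_0_4_4_4[simp]: "be (0,4,4,4) = 15" by (simp add: be_list Dl_def del: One_nat_def)
lemma al_1_4_4_4[simp]: "al (1,4,4,4) = 793" by (simp add: al_list Dl_def del: One_nat_def)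
lemma be_1_4_4_4[simp]: "be (1,4,4,4) = 10" by (simp add: be_list Dl_def del: One_nat_def)
lemma al_2_4_4_4[simp]: "al (2,4,4,4) = 1095" by (simp add: al_list Dl_def del: One_nat_def)
lemma be_2_4_4_4[simp]: "be (2,4,4,4) = 6" by (simp add: be_list Dl_def del: One_nat_def)
lemma al_3_4_4_4[simp]: "al (3,4,4,4) = 1239" by (simp add: al_list Dl_def del: One_nat_def)
lemma be_3_4_4_4[simp]: "be (3,4,4,4) = 3" by (simp add: be_list Dl_def del: One_nat_def)
lemma al_4_4_4_4[simp]: "al (4,4,4,4) = 1274" by (simp add: al_list Dl_def del: One_nat_def)
lemma be_4_4_4_4[simp]: "be (4,4,4,4) = 1" by (simp add: be_list Dl_def del: One_nat_def)
lemma row_0_0_0_0[simp]: "row (0,0,0,0) = 25078" by (simp add: row_def Dl_def del: One_nat_def)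
lemma row_0_0_0_1[simp]: "row (0,0,0,1) = 72651" by (simp add: row_def Dl_def del: One_nat_def)
lemma row_0_0_1_1[simp]: "row (0,0,1,1) = 64783" by (simp add: row_def Dl_def del: One_nat_def)
lemma row_0_1_0_1[simp]: "row (0,1,0,1) = 64783" by (simp add: row_def Dl_def del: One_nat_def)
lemma row_0_1_1_1[simp]: "row (0,1,1,1) = 159295" by (simp add: row_def Dl_def del: One_nat_def)
lemma row_1_1_1_1[simp]: "row (1,1,1,1) = 123123" by (simp add: row_def Dl_def del: One_nat_def)
lemma row_0_0_0_2[simp]: "row (0,0,0,2) = 129819" by (simp add: row_def Dl_def del: One_nat_def)
lemma row_0_0_1_2[simp]: "row (0,0,1,2) = 117509" by (simp add: row_def Dl_def del: One_nat_def)
lemma row_0_0_2_2[simp]: "row (0,0,2,2) = 80618" by (simp add: row_def Dl_def del: One_nat_def)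
lemma row_0_1_0_2[simp]: "row (0,1,0,2) = 117509" by (simp add: row_def Dl_def del: One_nat_def)
lemma row_0_1_1_2[simp]: "row (0,1,1,2) = 341192" by (simp add: row_def Dl_def del: One_nat_def)
lemma row_1_1_1_2[simp]: "row (1,1,1,2) = 275617" by (simp add: row_def Dl_def del: One_nat_def)
lemma row_0_1_2_2[simp]: "row (0,1,2,2) = 248510" by (simp add: row_def Dl_def del: One_nat_def)
lemma row_1_1_2_2[simp]: "row (1,1,2,2) = 218324" by (simp add: row_def Dl_def del: One_nat_def)
lemma row_0_2_0_2[simp]: "row (0,2,0,2) = 80618" by (simp add: row_def Dl_def del: One_nat_def)
lemma row_0_2_1_2[simp]: "row (0,2,1,2) = 248510" by (simp add: row_def Dl_def del: One_nat_def)
lemma row_1_2_1_2[simp]: "row (1,2,1,2) = 218324" by (simp add: row_def Dl_def del: One_nat_def)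
lemma row_0_2_2_2[simp]: "row (0,2,2,2) = 353418" by (simp add: row_def Dl_def del: One_nat_def)
lemma row_1_2_2_2[simp]: "row (1,2,2,2) = 343592" by (simp add: row_def Dl_def del: One_nat_def)
lemma row_2_2_2_2[simp]: "row (2,2,2,2) = 192456" by (simp add: row_def Dl_def del: One_nat_def)
lemma row_0_0_0_3[simp]: "row (0,0,0,3) = 166357" by (simp add: row_def Dl_def del: One_nat_def)
lemma row_0_0_1_3[simp]: "row (0,0,1,3) = 153101" by (simp add: row_def Dl_def del: One_nat_def)
lemma row_0_0_2_3[simp]: "row (0,0,2,3) = 111060" by (simp add: row_def Dl_def del: One_nat_def)
lemma row_0_0_3_3[simp]: "row (0,0,3,3) = 52165" by (simp add: row_def Dl_def del: One_nat_def)
lemma row_0_1_0_3[simp]: "row (0,1,0,3) = 153101" by (simp add: row_def Dl_def del: One_nat_def)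
lemma row_0_1_1_3[simp]: "row (0,1,1,3) = 479680" by (simp add: row_def Dl_def del: One_nat_def)
lemma row_1_1_1_3[simp]: "row (1,1,1,3) = 401531" by (simp add: row_def Dl_def del: One_nat_def)
lemma row_0_1_2_3[simp]: "row (0,1,2,3) = 367235" by (simp add: row_def Dl_def del: One_nat_def)
lemma row_1_1_2_3[simp]: "row (1,1,2,3) = 330501" by (simp add: row_def Dl_def del: One_nat_def)
lemma row_0_1_3_3[simp]: "row (0,1,3,3) = 180544" by (simp add: row_def Dl_def del: One_nat_def)
lemma row_1_1_3_3[simp]: "row (1,1,3,3) = 172996" by (simp add: row_def Dl_def del: One_nat_def)
lemma row_0_2_0_3[simp]: "row (0,2,0,3) = 111060" by (simp add: row_def Dl_def del: One_nat_def)
lemma row_0_2_1_3[simp]: "row (0,2,1,3) = 367235" by (simp add: row_def Dl_def del: One_nat_def)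
lemma row_1_2_1_3[simp]: "row (1,2,1,3) = 330501" by (simp add: row_def Dl_def del: One_nat_def)
lemma row_0_2_2_3[simp]: "row (0,2,2,3) = 580810" by (simp add: row_def Dl_def del: One_nat_def)
lemma row_1_2_2_3[simp]: "row (1,2,2,3) = 590892" by (simp add: row_def Dl_def del: One_nat_def)
lemma row_2_2_2_3[simp]: "row (2,2,2,3) = 343592" by (simp add: row_def Dl_def del: One_nat_def)
lemma row_0_2_3_3[simp]: "row (0,2,3,3) = 302997" by (simp add: row_def Dl_def del: One_nat_def)
lemma row_1_2_3_3[simp]: "row (1,2,3,3) = 330501" by (simp add: row_def Dl_def del: One_nat_def)
lemma row_2_2_3_3[simp]: "row (2,2,3,3) = 218324" by (simp add: row_def Dl_def del: One_nat_def)
lemma row_0_3_0_3[simp]: "row (0,3,0,3) = 52165" by (simp add: row_def Dl_def del: One_nat_def)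
lemma row_0_3_1_3[simp]: "row (0,3,1,3) = 180544" by (simp add: row_def Dl_def del: One_nat_def)
lemma row_1_3_1_3[simp]: "row (1,3,1,3) = 172996" by (simp add: row_def Dl_def del: One_nat_def)
lemma row_0_3_2_3[simp]: "row (0,3,2,3) = 302997" by (simp add: row_def Dl_def del: One_nat_def)
lemma row_1_3_2_3[simp]: "row (1,3,2,3) = 330501" by (simp add: row_def Dl_def del: One_nat_def)
lemma row_2_3_2_3[simp]: "row (2,3,2,3) = 218324" by (simp add: row_def Dl_def del: One_nat_def)
lemma row_0_3_3_3[simp]: "row (0,3,3,3) = 353449" by (simp add: row_def Dl_def del: One_nat_def)
lemma row_1_3_3_3[simp]: "row (1,3,3,3) = 401531" by (simp add: row_def Dl_def del: One_nat_def)
lemma row_2_3_3_3[simp]: "row (2,3,3,3) = 275617" by (simp add: row_def Dl_def del: One_nat_def)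
lemma row_3_3_3_3[simp]: "row (3,3,3,3) = 123123" by (simp add: row_def Dl_def del: One_nat_def)
lemma row_0_0_0_4[simp]: "row (0,0,0,4) = 131606" by (simp add: row_def Dl_def del: One_nat_def)
lemma row_0_0_1_4[simp]: "row (0,0,1,4) = 123099" by (simp add: row_def Dl_def del: One_nat_def)
lemma row_0_0_2_4[simp]: "row (0,0,2,4) = 94853" by (simp add: row_def Dl_def del: One_nat_def)
lemma row_0_0_3_4[simp]: "row (0,0,3,4) = 51444" by (simp add: row_def Dl_def del: One_nat_def)
lemma row_0_0_4_4[simp]: "row (0,0,4,4) = 13911" by (simp add: row_def Dl_def del: One_nat_def)
lemma row_0_1_0_4[simp]: "row (0,1,0,4) = 123099" by (simp add: row_def Dl_def del: One_nat_def)
lemma row_0_1_1_4[simp]: "row (0,1,1,4) = 406303" by (simp add: row_def Dl_def del: One_nat_def)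
lemma row_1_1_1_4[simp]: "row (1,1,1,4) = 353449" by (simp add: row_def Dl_def del: One_nat_def)
lemma row_0_1_2_4[simp]: "row (0,1,2,4) = 327791" by (simp add: row_def Dl_def del: One_nat_def)
lemma row_1_1_2_4[simp]: "row (1,1,2,4) = 302997" by (simp add: row_def Dl_def del: One_nat_def)
lemma row_0_1_3_4[simp]: "row (0,1,3,4) = 184996" by (simp add: row_def Dl_def del: One_nat_def)
lemma row_1_1_3_4[simp]: "row (1,1,3,4) = 180544" by (simp add: row_def Dl_def del: One_nat_def)
lemma row_0_1_4_4[simp]: "row (0,1,4,4) = 51444" by (simp add: row_def Dl_def del: One_nat_def)
lemma row_1_1_4_4[simp]: "row (1,1,4,4) = 52165" by (simp add: row_def Dl_def del: One_nat_def)
lemma row_0_2_0_4[simp]: "row (0,2,0,4) = 94853" by (simp add: row_def Dl_def del: One_nat_def)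
lemma row_0_2_1_4[simp]: "row (0,2,1,4) = 327791" by (simp add: row_def Dl_def del: One_nat_def)
lemma row_1_2_1_4[simp]: "row (1,2,1,4) = 302997" by (simp add: row_def Dl_def del: One_nat_def)
lemma row_0_2_2_4[simp]: "row (0,2,2,4) = 550238" by (simp add: row_def Dl_def del: One_nat_def)
lemma row_1_2_2_4[simp]: "row (1,2,2,4) = 580810" by (simp add: row_def Dl_def del: One_nat_def)
lemma row_2_2_2_4[simp]: "row (2,2,2,4) = 353418" by (simp add: row_def Dl_def del: One_nat_def)
lemma row_0_2_3_4[simp]: "row (0,2,3,4) = 327791" by (simp add: row_def Dl_def del: One_nat_def)
lemma row_1_2_3_4[simp]: "row (1,2,3,4) = 367235" by (simp add: row_def Dl_def del: One_nat_def)
lemma row_2_2_3_4[simp]: "row (2,2,3,4) = 248510" by (simp add: row_def Dl_def del: One_nat_def)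
lemma row_0_2_4_4[simp]: "row (0,2,4,4) = 94853" by (simp add: row_def Dl_def del: One_nat_def)
lemma row_1_2_4_4[simp]: "row (1,2,4,4) = 111060" by (simp add: row_def Dl_def del: One_nat_def)
lemma row_2_2_4_4[simp]: "row (2,2,4,4) = 80618" by (simp add: row_def Dl_def del: One_nat_def)
lemma row_0_3_0_4[simp]: "row (0,3,0,4) = 51444" by (simp add: row_def Dl_def del: One_nat_def)
lemma row_0_3_1_4[simp]: "row (0,3,1,4) = 184996" by (simp add: row_def Dl_def del: One_nat_def)
lemma row_1_3_1_4[simp]: "row (1,3,1,4) = 180544" by (simp add: row_def Dl_def del: One_nat_def)
lemma row_0_3_2_4[simp]: "row (0,3,2,4) = 327791" by (simp add: row_def Dl_def del: One_nat_def)
lemma row_1_3_2_4[simp]: "row (1,3,2,4) = 367235" by (simp add: row_def Dl_def del: One_nat_def)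
lemma row_2_3_2_4[simp]: "row (2,3,2,4) = 248510" by (simp add: row_def Dl_def del: One_nat_def)
lemma row_0_3_3_4[simp]: "row (0,3,3,4) = 406303" by (simp add: row_def Dl_def del: One_nat_def)
lemma row_1_3_3_4[simp]: "row (1,3,3,4) = 479680" by (simp add: row_def Dl_def del: One_nat_def)
lemma row_2_3_3_4[simp]: "row (2,3,3,4) = 341192" by (simp add: row_def Dl_def del: One_nat_def)
lemma row_3_3_3_4[simp]: "row (3,3,3,4) = 159295" by (simp add: row_def Dl_def del: One_nat_def)
lemma row_0_3_4_4[simp]: "row (0,3,4,4) = 123099" by (simp add: row_def Dl_def del: One_nat_def)
lemma row_1_3_4_4[simp]: "row (1,3,4,4) = 153101" by (simp add: row_def Dl_def del: One_nat_def)
lemma row_2_3_4_4[simp]: "row (2,3,4,4) = 117509" by (simp add: row_def Dl_def del: One_nat_def)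
lemma row_3_3_4_4[simp]: "row (3,3,4,4) = 64783" by (simp add: row_def Dl_def del: One_nat_def)
lemma row_0_4_0_4[simp]: "row (0,4,0,4) = 13911" by (simp add: row_def Dl_def del: One_nat_def)
lemma row_0_4_1_4[simp]: "row (0,4,1,4) = 51444" by (simp add: row_def Dl_def del: One_nat_def)
lemma row_1_4_1_4[simp]: "row (1,4,1,4) = 52165" by (simp add: row_def Dl_def del: One_nat_def)
lemma row_0_4_2_4[simp]: "row (0,4,2,4) = 94853" by (simp add: row_def Dl_def del: One_nat_def)
lemma row_1_4_2_4[simp]: "row (1,4,2,4) = 111060" by (simp add: row_def Dl_def del: One_nat_def)
lemma row_2_4_2_4[simp]: "row (2,4,2,4) = 80618" by (simp add: row_def Dl_def del: One_nat_def)
lemma row_0_4_3_4[simp]: "row (0,4,3,4) = 123099" by (simp add: row_def Dl_def del: One_nat_def)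
lemma row_1_4_3_4[simp]: "row (1,4,3,4) = 153101" by (simp add: row_def Dl_def del: One_nat_def)
lemma row_2_4_3_4[simp]: "row (2,4,3,4) = 117509" by (simp add: row_def Dl_def del: One_nat_def)
lemma row_3_4_3_4[simp]: "row (3,4,3,4) = 64783" by (simp add: row_def Dl_def del: One_nat_def)
lemma row_0_4_4_4[simp]: "row (0,4,4,4) = 131606" by (simp add: row_def Dl_def del: One_nat_def)
lemma row_1_4_4_4[simp]: "row (1,4,4,4) = 166357" by (simp add: row_def Dl_def del: One_nat_def)
lemma row_2_4_4_4[simp]: "row (2,4,4,4) = 129819" by (simp add: row_def Dl_def del: One_nat_def)
lemma row_3_4_4_4[simp]: "row (3,4,4,4) = 72651" by (simp add: row_def Dl_def del: One_nat_def)
lemma row_4_4_4_4[simp]: "row (4,4,4,4) = 25078" by (simp add: row_def Dl_def del: One_nat_def)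
lemma total: "sum_list (map row Dl) = 22062570" by (simp add: Dl_def del: One_nat_def)
lemma card_T: "card T = 22062570" using card_T_sum total by simp

lemma finite_T: "finite T"
proof (rule finite_subset)
  show "T \<subseteq> Sy \<times> Dd \<times> Dd \<times> Dd \<times> Dd \<times> Sy" by (auto simp: T_def)
  show "finite (Sy \<times> Dd \<times> Dd \<times> Dd \<times> Dd \<times> Sy)" using fin_Sy fin_Dd by simp
qed

lemma finite_P6: "finite P6"
proof -
  have "finite (chains P6)" using partC1 finite_T bij_betw_finite by blast
  moreover have "P6 \<subseteq> fst ` chains P6"
  proof
    fix a assume "a \<in> P6"
    then have "(a,a,a,a) \<in> chains P6" by (simp add: chains_def)
    then show "a \<in> fst ` chains P6" by force
  qed
  ultimately show ?thesis using finite_subset by blast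
qed

theorem mainTheorem5:
  defines "P \<equiv> Phi 6 (cycle_of_list [1,2] \<circ> cycle_of_list [3,4,5,6])"
  shows "phi 9 (cycle_of_list [1,2] \<circ> cycle_of_list [3,4,5] \<circ> cycle_of_list [6,7,8,9])
           = entry_sum P (mpow P (incidence P) 3)
       \<and> phi 9 (cycle_of_list [1,2] \<circ> cycle_of_list [3,4,5] \<circ> cycle_of_list [6,7,8,9])
           = card {(a1, a2, a3, a4). a1 \<in> P \<and> a2 \<in> P \<and> a3 \<in> P \<and> a4 \<in> P
                                      \<and> a1 \<le> a2 \<and> a2 \<le> a3 \<and> a3 \<le> a4}
       \<and> phi 9 (cycle_of_list [1,2] \<circ> cycle_of_list [3,4,5] \<circ> cycle_of_list [6,7,8,9])
           = 22062570"
proof -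
  have PP: "P = P6" by (simp add: P_def P6_def s6_def)
  have pp: "cycle_of_list [1,2] \<circ> cycle_of_list [3,4,5] \<circ> cycle_of_list [6,7,8,9] = p9"
    by (simp add: p9_def)
  have c1: "phi 9 p9 = card (chains P6)"
    unfolding phi_def using bij_betw_same_card[OF partB] by simp
  have c2: "card (chains P6) = 22062570"
    using bij_betw_same_card[OF partC1] card_T by simp
  have c3: "entry_sum P (mpow P (incidence P) 3) = card (chains P)"
    unfolding PP by (rule partA[OF finite_P6])
  have c4: "{(a1, a2, a3, a4). a1 \<in> P \<and> a2 \<in> P \<and> a3 \<in> P \<and> a4 \<in> P
                                      \<and> a1 \<le> a2 \<and> a2 \<le> a3 \<and> a3 \<le> a4} = chains P"
    by (simp add: chains_def)
  show ?thesis unfolding pp c4 c3 using c1 c2 PP by simp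
qed

end
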